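(* Let $\mathcal T=(T_1,\dots,T_n)\in B(H)^n$. Then $$\bigcup_{\mathcal K\in\mathcal K(H)^n}\mathcal D_{\rm const}(\mathcal T+\mathcal K)=W_{\rm e}(\mathcal T).$$
   Context: $H$ is an infinite-dimensional complex separable Hilbert space and $\mathcal K(H)$ the compact operators on $H$; for $\mathcal K=(K_1,\dots,K_n)$, $\mathcal T+\mathcal K=(T_1+K_1,\dots,T_n+K_n)$. $W_{\rm e}(\mathcal T)$ is the set of $\lambda\in\mathbb C^n$ such that $\langle T_jx_k,x_k\rangle\to\lambda_j$ for all $j$ for some orthonormal sequence $(x_k)$. $\mathcal D_{\rm const}(\mathcal T)$ is the set of $\lambda\in\mathbb C^n$ for which there is an orthonormal basis $(u_k)$ of $H$ with $\langle T_ju_k,u_k\rangle=\lambda_j$ for all $k$ and $j$. *)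

theory Defs
  imports "HOL-Analysis.Analysis"
begin

text \<open>Concrete model of an infinite-dimensional separable complex Hilbert space:
  H = l2(nat), square-summable complex sequences.\<close>

definition l2 :: "(nat \<Rightarrow> complex) set" where
  "l2 = {x. summable (\<lambda>k. (cmod (x k))^2)}"

definition l2_inner :: "(nat \<Rightarrow> complex) \<Rightarrow> (nat \<Rightarrow> complex) \<Rightarrow> complex" where
  "l2_inner x y = (\<Sum>k. x k * cnj (y k))"

definition l2_norm :: "(nat \<Rightarrow> complex) \<Rightarrow> real" where
  "l2_norm x = sqrt (\<Sum>k. (cmod (x k))^2)"

text \<open>Bounded linear operators on H (only their values on l2 matter).\<close>
definition bounded_op :: "((nat \<Rightarrow> complex) \<Rightarrow> (nat \<Rightarrow> complex)) \<Rightarrow> bool" where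
  "bounded_op T \<longleftrightarrow>
     (\<forall>x\<in>l2. T x \<in> l2) \<and>
     (\<forall>x\<in>l2. \<forall>y\<in>l2. \<forall>a b. T (\<lambda>k. a * x k + b * y k) = (\<lambda>k. a * T x k + b * T y k)) \<and>
     (\<exists>C. \<forall>x\<in>l2. l2_norm (T x) \<le> C * l2_norm x)"

definition compact_op :: "((nat \<Rightarrow> complex) \<Rightarrow> (nat \<Rightarrow> complex)) \<Rightarrow> bool" where
  "compact_op K \<longleftrightarrow> bounded_op K \<and>
     (\<forall>x::nat \<Rightarrow> (nat \<Rightarrow> complex). (\<forall>i. x i \<in> l2) \<and> (\<exists>B. \<forall>i. l2_norm (x i) \<le> B) \<longrightarrow>
        (\<exists>r z. strict_mono r \<and> z \<in> l2 \<and>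
              (\<lambda>i. l2_norm (\<lambda>k. K (x (r i)) k - z k)) \<longlonglongrightarrow> 0))"

definition orthonormal_seq :: "(nat \<Rightarrow> (nat \<Rightarrow> complex)) \<Rightarrow> bool" where
  "orthonormal_seq u \<longleftrightarrow> (\<forall>k. u k \<in> l2) \<and>
     (\<forall>i j. l2_inner (u i) (u j) = (if i = j then 1 else 0))"

definition orthonormal_basis :: "(nat \<Rightarrow> (nat \<Rightarrow> complex)) \<Rightarrow> bool" where
  "orthonormal_basis u \<longleftrightarrow> orthonormal_seq u \<and>
     (\<forall>y\<in>l2. (\<forall>k. l2_inner y (u k) = 0) \<longrightarrow> y = (\<lambda>_. 0))"

definition ess_num_range ::
  "('n::finite \<Rightarrow> (nat \<Rightarrow> complex) \<Rightarrow> (nat \<Rightarrow> complex)) \<Rightarrow> (complex ^ 'n) set" where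
  "ess_num_range T = {lam. \<exists>x. orthonormal_seq x \<and>
      (\<forall>j. (\<lambda>k. l2_inner (T j (x k)) (x k)) \<longlonglongrightarrow> lam $ j)}"

definition D_const ::
  "('n::finite \<Rightarrow> (nat \<Rightarrow> complex) \<Rightarrow> (nat \<Rightarrow> complex)) \<Rightarrow> (complex ^ 'n) set" where
  "D_const T = {lam. \<exists>u. orthonormal_basis u \<and>
      (\<forall>k j. l2_inner (T j (u k)) (u k) = lam $ j)}"

end

theory Submission
  imports Defs
begin

definition fsupp :: "nat \<Rightarrow> (nat \<Rightarrow> complex) \<Rightarrow> bool" where
  "fsupp L x \<longleftrightarrow> (\<forall>m\<ge>L. x m = 0)"

lemma l2_iff: "x \<in> l2 \<longleftrightarrow> summable (\<lambda>k. (cmod (x k))^2)" by (simp add: l2_def)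

lemma cmod_mult_cnj_le: "cmod (a * cnj b) \<le> ((cmod a)^2 + (cmod b)^2)/2"
proof -
  have "0 \<le> (cmod a - cmod b)^2" by simp
  thus ?thesis by (simp add: norm_mult power2_eq_square algebra_simps)
qed

lemma sq_add_le: "(cmod (p + q))^2 \<le> 2*(cmod p)^2 + 2*(cmod q)^2"
proof -
  have "cmod (p+q) \<le> cmod p + cmod q" by (rule norm_triangle_ineq)
  hence "(cmod (p+q))^2 \<le> (cmod p + cmod q)^2" by (simp add: power_mono)
  also have "\<dots> \<le> 2*(cmod p)^2 + 2*(cmod q)^2"
  proof -
    have "0 \<le> (cmod p - cmod q)^2" by simp
    thus ?thesis by (simp add: power2_eq_square algebra_simps)
  qed
  finally show ?thesis .
qed

lemma inner_abs_summable:
  assumes "x \<in> l2" "y \<in> l2" shows "summable (\<lambda>k. cmod (x k * cnj (y k)))"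
proof (rule summable_comparison_test)
  show "\<exists>N. \<forall>n\<ge>N. norm (cmod (x n * cnj (y n))) \<le> ((cmod (x n))^2 + (cmod (y n))^2)/2"
    using cmod_mult_cnj_le by auto
  show "summable (\<lambda>n. ((cmod (x n))^2 + (cmod (y n))^2)/2)"
    using assms by (intro summable_divide summable_add) (auto simp: l2_iff)
qed

lemma inner_summable:
  assumes "x \<in> l2" "y \<in> l2" shows "summable (\<lambda>k. x k * cnj (y k))"
  using inner_abs_summable[OF assms] by (rule summable_norm_cancel)

lemma l2_lin: assumes "x \<in> l2" "y \<in> l2" shows "(\<lambda>k. a * x k + b * y k) \<in> l2"
proof -
  have "summable (\<lambda>k. (cmod (a * x k + b * y k))^2)"
  proof (rule summable_comparison_test)
    show "\<exists>N. \<forall>n\<ge>N. norm ((cmod (a * x n + b * y n))^2) \<le> 2*(cmod a)^2*(cmod (x n))^2 + 2*(cmod b)^2*(cmod (y n))^2"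
    proof (intro exI allI impI)
      fix n :: nat
      have "(cmod (a*x n + b*y n))^2 \<le> 2*(cmod (a*x n))^2 + 2*(cmod (b*y n))^2" by (rule sq_add_le)
      thus "norm ((cmod (a * x n + b * y n))^2) \<le> 2*(cmod a)^2*(cmod (x n))^2 + 2*(cmod b)^2*(cmod (y n))^2"
        by (simp add: norm_mult power_mult_distrib)
    qed
    show "summable (\<lambda>n. 2*(cmod a)^2*(cmod (x n))^2 + 2*(cmod b)^2*(cmod (y n))^2)"
      using assms by (intro summable_add summable_mult) (auto simp: l2_iff)
  qed
  thus ?thesis by (simp add: l2_iff)
qed

lemma l2_add: "x \<in> l2 \<Longrightarrow> y \<in> l2 \<Longrightarrow> (\<lambda>k. x k + y k) \<in> l2"
  using l2_lin[of x y 1 1] by simp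
lemma l2_diff: "x \<in> l2 \<Longrightarrow> y \<in> l2 \<Longrightarrow> (\<lambda>k. x k - y k) \<in> l2"
  using l2_lin[of x y 1 "-1"] by simp
lemma l2_scale: "x \<in> l2 \<Longrightarrow> (\<lambda>k. a * x k) \<in> l2"
  using l2_lin[of x x a 0] by simp
lemma l2_zero: "(\<lambda>k. 0) \<in> l2" by (simp add: l2_iff)

lemma l2_fsupp: "fsupp L x \<Longrightarrow> x \<in> l2"
  unfolding l2_iff fsupp_def
  by (rule summable_finite[of "{..<L}"]) auto

lemma l2_sum: assumes "finite I" "\<forall>i\<in>I. v i \<in> l2"
  shows "(\<lambda>k. \<Sum>i\<in>I. c i * v i k) \<in> l2"
  using assms
proof (induction I rule: finite_induct)
  case empty thus ?case by (simp add: l2_zero)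
next
  case (insert i I)
  have "(\<lambda>k. c i * v i k + 1 * (\<Sum>i\<in>I. c i * v i k)) \<in> l2"
    using insert by (intro l2_lin) auto
  thus ?case using insert by simp
qed

lemma inner_lin_left:
  assumes "x \<in> l2" "y \<in> l2" "z \<in> l2"
  shows "l2_inner (\<lambda>k. a * x k + b * y k) z = a * l2_inner x z + b * l2_inner y z"
proof -
  have "(\<lambda>k. (a * x k + b * y k) * cnj (z k)) = (\<lambda>k. a * (x k * cnj (z k)) + b * (y k * cnj (z k)))"
    by (auto simp: algebra_simps)
  moreover have "(\<Sum>k. a * (x k * cnj (z k)) + b * (y k * cnj (z k))) = a * (\<Sum>k. x k * cnj (z k)) + b * (\<Sum>k. y k * cnj (z k))"
    using inner_summable[OF assms(1,3)] inner_summable[OF assms(2,3)]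
    by (subst suminf_add[symmetric]) (auto intro: summable_mult simp: suminf_mult)
  ultimately show ?thesis by (simp add: l2_inner_def)
qed

lemma suminf_cnj: "summable f \<Longrightarrow> (\<Sum>k. cnj (f k)) = cnj (suminf f)"
  by (metis sums_cnj sums_unique summable_sums)

lemma inner_cnj: assumes "x \<in> l2" "y \<in> l2" shows "l2_inner y x = cnj (l2_inner x y)"
proof -
  have "l2_inner y x = (\<Sum>k. cnj (x k * cnj (y k)))" by (simp add: l2_inner_def mult.commute)
  also have "\<dots> = cnj (l2_inner x y)" unfolding l2_inner_def
    by (rule suminf_cnj[OF inner_summable[OF assms]])
  finally show ?thesis .
qed

lemma inner_lin_right:
  assumes "x \<in> l2" "y \<in> l2" "z \<in> l2"
  shows "l2_inner z (\<lambda>k. a * x k + b * y k) = cnj a * l2_inner z x + cnj b * l2_inner z y"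
proof -
  have w: "(\<lambda>k. a * x k + b * y k) \<in> l2" using assms(1,2) by (rule l2_lin)
  have "l2_inner z (\<lambda>k. a * x k + b * y k) = cnj (l2_inner (\<lambda>k. a * x k + b * y k) z)"
    using inner_cnj[OF w assms(3)] .
  also have "\<dots> = cnj a * l2_inner z x + cnj b * l2_inner z y"
    using inner_lin_left[OF assms, of a b] inner_cnj[OF assms(3) assms(1)] inner_cnj[OF assms(3) assms(2)]
    by simp
  finally show ?thesis .
qed

lemma inner_sum_left:
  assumes "finite I" "\<forall>i\<in>I. v i \<in> l2" "z \<in> l2"
  shows "l2_inner (\<lambda>k. \<Sum>i\<in>I. c i * v i k) z = (\<Sum>i\<in>I. c i * l2_inner (v i) z)"
proof -
  have "l2_inner (\<lambda>k. \<Sum>i\<in>I. c i * v i k) z = (\<Sum>k. \<Sum>i\<in>I. c i * (v i k * cnj (z k)))"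
    unfolding l2_inner_def by (simp add: sum_distrib_right mult.assoc)
  also have "\<dots> = (\<Sum>i\<in>I. \<Sum>k. c i * (v i k * cnj (z k)))"
    using assms by (intro suminf_sum summable_mult inner_summable) auto
  also have "\<dots> = (\<Sum>i\<in>I. c i * l2_inner (v i) z)"
    unfolding l2_inner_def using assms
    by (intro sum.cong refl) (simp add: suminf_mult inner_summable)
  finally show ?thesis .
qed

lemma inner_sum_right:
  assumes "finite I" "\<forall>i\<in>I. v i \<in> l2" "z \<in> l2"
  shows "l2_inner z (\<lambda>k. \<Sum>i\<in>I. c i * v i k) = (\<Sum>i\<in>I. cnj (c i) * l2_inner z (v i))"
proof -
  have w: "(\<lambda>k. \<Sum>i\<in>I. c i * v i k) \<in> l2" using assms l2_sum by blast
  have "l2_inner z (\<lambda>k. \<Sum>i\<in>I. c i * v i k) = cnj (\<Sum>i\<in>I. c i * l2_inner (v i) z)"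
    using inner_cnj[OF w assms(3)] inner_sum_left[OF assms] by simp
  also have "\<dots> = (\<Sum>i\<in>I. cnj (c i) * l2_inner z (v i))"
  proof -
    have "cnj (\<Sum>i\<in>I. c i * l2_inner (v i) z) = (\<Sum>i\<in>I. cnj (c i) * cnj (l2_inner (v i) z))" by simp
    also have "\<dots> = (\<Sum>i\<in>I. cnj (c i) * l2_inner z (v i))"
    proof (rule sum.cong[OF refl])
      fix i assume "i \<in> I"
      hence "l2_inner (v i) z = cnj (l2_inner z (v i))" using assms inner_cnj[of z "v i"] by simp
      thus "cnj (c i) * cnj (l2_inner (v i) z) = cnj (c i) * l2_inner z (v i)" by simp
    qed
    finally show ?thesis .
  qed
  finally show ?thesis .
qed

lemma l2_norm_nonneg: assumes "x \<in> l2" shows "0 \<le> l2_norm x"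
proof -
  have "0 \<le> (\<Sum>k. (cmod (x k))^2)" by (rule suminf_nonneg) (use assms in \<open>auto simp: l2_iff\<close>)
  thus ?thesis unfolding l2_norm_def by simp
qed

lemma l2_norm_sq: assumes "x \<in> l2" shows "(l2_norm x)^2 = (\<Sum>k. (cmod (x k))^2)"
proof -
  have "0 \<le> (\<Sum>k. (cmod (x k))^2)" by (rule suminf_nonneg) (use assms in \<open>auto simp: l2_iff\<close>)
  thus ?thesis unfolding l2_norm_def by simp
qed

lemma inner_self: assumes "x \<in> l2" shows "l2_inner x x = complex_of_real ((l2_norm x)^2)"
proof -
  have e: "\<And>k. x k * cnj (x k) = complex_of_real ((cmod (x k))^2)" by (rule complex_norm_square[symmetric])
  have "l2_inner x x = (\<Sum>k. complex_of_real ((cmod (x k))^2))"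
    unfolding l2_inner_def e by (rule refl)
  also have "\<dots> = complex_of_real (\<Sum>k. (cmod (x k))^2)"
    using assms by (simp add: l2_iff suminf_of_real)
  finally show ?thesis using l2_norm_sq[OF assms] by simp
qed

lemma l2_norm_zero: assumes "x \<in> l2" "l2_norm x = 0" shows "x k = 0"
proof -
  have "(\<Sum>k. (cmod (x k))^2) = 0" using l2_norm_sq[OF assms(1)] assms(2) by simp
  hence "\<forall>k. (cmod (x k))^2 = 0" using assms(1) by (subst (asm) suminf_eq_zero_iff) (auto simp: l2_iff)
  thus ?thesis by simp
qed

lemma cauchy_schwarz:
  assumes "x \<in> l2" "y \<in> l2"
  shows "cmod (l2_inner x y) \<le> l2_norm x * l2_norm y"
proof -
  let ?A = "(l2_norm x)^2" and ?B = "(l2_norm y)^2"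
  have s: "summable (\<lambda>k. cmod (x k * cnj (y k)))" by (rule inner_abs_summable[OF assms])
  have le1: "cmod (l2_inner x y) \<le> (\<Sum>k. cmod (x k * cnj (y k)))"
    unfolding l2_inner_def by (rule summable_norm[OF s])
  have key: "(\<Sum>k. cmod (x k * cnj (y k))) \<le> (t * ?A + ?B / t)/2" if t: "t > 0" for t
  proof -
    have "\<And>k. cmod (x k * cnj (y k)) \<le> (t * (cmod (x k))^2 + (cmod (y k))^2 / t)/2"
    proof -
      fix k
      have "(t * (cmod (x k))^2 + (cmod (y k))^2 / t)/2 - cmod (x k) * cmod (y k) = (t * cmod (x k) - cmod (y k))^2 / (2*t)"
        using t by (simp add: field_simps power2_eq_square)
      moreover have "0 \<le> (t * cmod (x k) - cmod (y k))^2 / (2*t)" using t by simp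
      ultimately have "cmod (x k) * cmod (y k) \<le> (t * (cmod (x k))^2 + (cmod (y k))^2 / t)/2" by linarith
      thus "cmod (x k * cnj (y k)) \<le> (t * (cmod (x k))^2 + (cmod (y k))^2 / t)/2"
        by (simp add: norm_mult)
    qed
    hence "(\<Sum>k. cmod (x k * cnj (y k))) \<le> (\<Sum>k. (t * (cmod (x k))^2 + (cmod (y k))^2 / t)/2)"
      using assms s by (intro suminf_le) (auto simp: l2_iff intro!: summable_divide summable_add summable_mult)
    also have "\<dots> = (t * ?A + ?B / t)/2"
    proof -
      have s1: "summable (\<lambda>k. t * (cmod (x k))^2)" using assms by (intro summable_mult) (simp add: l2_iff)
      have s2: "summable (\<lambda>k. (cmod (y k))^2 / t)" using assms by (intro summable_divide) (simp add: l2_iff)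
      have "(\<Sum>k. (t * (cmod (x k))^2 + (cmod (y k))^2 / t)/2) = (\<Sum>k. t * (cmod (x k))^2 + (cmod (y k))^2 / t)/2"
        by (rule suminf_divide) (intro summable_add s1 s2)
      also have "(\<Sum>k. t * (cmod (x k))^2 + (cmod (y k))^2 / t) = (\<Sum>k. t * (cmod (x k))^2) + (\<Sum>k. (cmod (y k))^2 / t)"
        by (rule suminf_add[OF s1 s2, symmetric])
      also have "(\<Sum>k. t * (cmod (x k))^2) = t * ?A" using assms by (simp add: l2_norm_sq suminf_mult l2_iff)
      also have "(\<Sum>k. (cmod (y k))^2 / t) = ?B / t" using assms by (simp add: l2_norm_sq suminf_divide l2_iff)
      finally show ?thesis .
    qed
    finally show ?thesis .
  qed
  show ?thesis
  proof (cases "l2_norm x = 0 \<or> l2_norm y = 0")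
    case True
    hence "\<forall>k. x k * cnj (y k) = 0"
      using l2_norm_zero assms by auto
    hence "(\<lambda>k. cmod (x k * cnj (y k))) = (\<lambda>k. 0)" by auto
    hence "(\<Sum>k. cmod (x k * cnj (y k))) = 0" by simp
    thus ?thesis using le1 l2_norm_nonneg[OF assms(1)] l2_norm_nonneg[OF assms(2)] by simp
  next
    case False
    hence px: "l2_norm x > 0" and py: "l2_norm y > 0" using l2_norm_nonneg[OF assms(1)] l2_norm_nonneg[OF assms(2)] by auto
    have "(\<Sum>k. cmod (x k * cnj (y k))) \<le> ((l2_norm y / l2_norm x) * ?A + ?B / (l2_norm y / l2_norm x))/2"
      using px py by (intro key) simp
    also have "\<dots> = l2_norm x * l2_norm y" using px py by (simp add: power2_eq_square field_simps)
    finally show ?thesis using le1 by simp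
  qed
qed

lemma coord_le_norm: assumes "x \<in> l2" shows "cmod (x m) \<le> l2_norm x"
proof -
  have s: "summable (\<lambda>k. (cmod (x k))^2)" using assms by (simp add: l2_iff)
  have "(\<Sum>k\<in>{m}. (cmod (x k))^2) \<le> (\<Sum>k. (cmod (x k))^2)" by (rule sum_le_suminf[OF s]) auto
  hence "(cmod (x m))^2 \<le> (l2_norm x)^2" using l2_norm_sq[OF assms] by simp
  thus ?thesis using l2_norm_nonneg[OF assms] by (rule power2_le_imp_le)
qed

lemma inner_fsupp_right: "fsupp L y \<Longrightarrow> l2_inner x y = (\<Sum>m<L. x m * cnj (y m))"
  unfolding l2_inner_def fsupp_def by (rule suminf_finite) auto

lemma inner_fsupp_left: "fsupp L x \<Longrightarrow> l2_inner x y = (\<Sum>m<L. x m * cnj (y m))"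
  unfolding l2_inner_def fsupp_def by (rule suminf_finite) auto

lemma norm_fsupp: assumes h: "fsupp L x" shows "(l2_norm x)^2 = (\<Sum>m<L. (cmod (x m))^2)"
proof -
  have "(l2_norm x)^2 = (\<Sum>k. (cmod (x k))^2)" by (rule l2_norm_sq[OF l2_fsupp[OF h]])
  also have "\<dots> = (\<Sum>m<L. (cmod (x m))^2)" by (rule suminf_finite) (use h in \<open>auto simp: fsupp_def\<close>)
  finally show ?thesis .
qed

lemma norm_sq_re: "x \<in> l2 \<Longrightarrow> (l2_norm x)^2 = Re (l2_inner x x)"
  by (simp add: inner_self)

lemma norm_triangle_l2:
  assumes "x \<in> l2" "y \<in> l2"
  shows "l2_norm (\<lambda>k. x k + y k) \<le> l2_norm x + l2_norm y"
proof -
  have w: "(\<lambda>k. x k + y k) \<in> l2" using assms by (rule l2_add)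
  have e: "l2_inner (\<lambda>k. x k + y k) (\<lambda>k. x k + y k) = l2_inner x x + l2_inner x y + l2_inner y x + l2_inner y y"
    using inner_lin_left[OF assms w, of 1 1] inner_lin_right[OF assms assms(1), of 1 1]
      inner_lin_right[OF assms assms(2), of 1 1] by simp
  have "Re (l2_inner x y + l2_inner y x) \<le> 2 * (l2_norm x * l2_norm y)"
  proof -
    have "Re (l2_inner x y) \<le> cmod (l2_inner x y)" by (rule complex_Re_le_cmod)
    moreover have "Re (l2_inner y x) \<le> cmod (l2_inner y x)" by (rule complex_Re_le_cmod)
    moreover have "l2_norm y * l2_norm x = l2_norm x * l2_norm y" by simp
    moreover have "Re (l2_inner x y + l2_inner y x) = Re (l2_inner x y) + Re (l2_inner y x)" by simp
    ultimately show ?thesis using cauchy_schwarz[OF assms] cauchy_schwarz[OF assms(2,1)] by linarith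
  qed
  hence "(l2_norm (\<lambda>k. x k + y k))^2 \<le> (l2_norm x + l2_norm y)^2"
    using e norm_sq_re[OF w] norm_sq_re[OF assms(1)] norm_sq_re[OF assms(2)]
    by (simp add: power2_eq_square algebra_simps)
  moreover have "0 \<le> l2_norm x + l2_norm y" using l2_norm_nonneg[OF assms(1)] l2_norm_nonneg[OF assms(2)] by simp
  ultimately show ?thesis by (rule power2_le_imp_le)
qed

lemma bop_l2: "bounded_op T \<Longrightarrow> x \<in> l2 \<Longrightarrow> T x \<in> l2"
  by (simp add: bounded_op_def)

lemma bop_lin: "bounded_op T \<Longrightarrow> x \<in> l2 \<Longrightarrow> y \<in> l2 \<Longrightarrow>
   T (\<lambda>k. a * x k + b * y k) = (\<lambda>k. a * T x k + b * T y k)"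
  by (simp add: bounded_op_def)

lemma bop_zero: "bounded_op T \<Longrightarrow> T (\<lambda>k. 0) = (\<lambda>k. 0)"
  using bop_lin[of T "\<lambda>k. 0" "\<lambda>k. 0" 0 0] l2_zero by simp

lemma bop_scale: "bounded_op T \<Longrightarrow> x \<in> l2 \<Longrightarrow> T (\<lambda>k. a * x k) = (\<lambda>k. a * T x k)"
  using bop_lin[of T x x a 0] by simp

lemma bop_add: "bounded_op T \<Longrightarrow> x \<in> l2 \<Longrightarrow> y \<in> l2 \<Longrightarrow> T (\<lambda>k. x k + y k) = (\<lambda>k. T x k + T y k)"
  using bop_lin[of T x y 1 1] by simp

lemma bop_diff: "bounded_op T \<Longrightarrow> x \<in> l2 \<Longrightarrow> y \<in> l2 \<Longrightarrow> T (\<lambda>k. x k - y k) = (\<lambda>k. T x k - T y k)"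
  using bop_lin[of T x y 1 "-1"] by simp

lemma bop_sum:
  assumes "bounded_op T" "finite I" "\<forall>i\<in>I. v i \<in> l2"
  shows "T (\<lambda>k. \<Sum>i\<in>I. c i * v i k) = (\<lambda>k. \<Sum>i\<in>I. c i * T (v i) k)"
  using assms(2,3)
proof (induction I rule: finite_induct)
  case empty thus ?case using bop_zero[OF assms(1)] by simp
next
  case (insert i I)
  have s: "(\<lambda>k. \<Sum>i\<in>I. c i * v i k) \<in> l2" using insert by (intro l2_sum) auto
  have "T (\<lambda>k. c i * v i k + 1 * (\<Sum>i\<in>I. c i * v i k)) = (\<lambda>k. c i * T (v i) k + 1 * T (\<lambda>k. \<Sum>i\<in>I. c i * v i k) k)"
    using insert s by (intro bop_lin assms(1)) auto
  thus ?case using insert by simp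
qed

lemma bop_bound: "bounded_op T \<Longrightarrow> \<exists>C\<ge>0. \<forall>x\<in>l2. l2_norm (T x) \<le> C * l2_norm x"
proof -
  assume "bounded_op T"
  then obtain C where C: "\<forall>x\<in>l2. l2_norm (T x) \<le> C * l2_norm x" by (auto simp: bounded_op_def)
  have "\<forall>x\<in>l2. l2_norm (T x) \<le> max C 0 * l2_norm x"
  proof
    fix x assume x: "x \<in> l2"
    have "C * l2_norm x \<le> max C 0 * l2_norm x" using l2_norm_nonneg[OF x] by (simp add: mult_right_mono)
    thus "l2_norm (T x) \<le> max C 0 * l2_norm x" using C x by force
  qed
  thus ?thesis by (intro exI[of _ "max C 0"]) auto
qed

lemma bops_bound:
  fixes T :: "'n::finite \<Rightarrow> (nat \<Rightarrow> complex) \<Rightarrow> (nat \<Rightarrow> complex)"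
  assumes "\<forall>j. bounded_op (T j)"
  shows "\<exists>C\<ge>0. \<forall>j. \<forall>x\<in>l2. l2_norm (T j x) \<le> C * l2_norm x"
proof -
  from assms bop_bound have "\<forall>j. \<exists>C\<ge>0. \<forall>x\<in>l2. l2_norm (T j x) \<le> C * l2_norm x" by blast
  then obtain Cf where Cf: "\<And>j. Cf j \<ge> 0" "\<And>j. \<forall>x\<in>l2. l2_norm (T j x) \<le> Cf j * l2_norm x" by metis
  define C where "C = (\<Sum>j\<in>UNIV. Cf j)"
  have le: "Cf j \<le> C" for j unfolding C_def
    by (rule member_le_sum) (auto simp: Cf)
  have "\<forall>j. \<forall>x\<in>l2. l2_norm (T j x) \<le> C * l2_norm x"
  proof (intro allI ballI)
    fix j x assume x: "x \<in> l2"
    have "Cf j * l2_norm x \<le> C * l2_norm x" using le l2_norm_nonneg[OF x] by (simp add: mult_right_mono)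
    thus "l2_norm (T j x) \<le> C * l2_norm x" using Cf(2)[of j] x by force
  qed
  moreover have "C \<ge> 0" unfolding C_def by (rule sum_nonneg) (simp add: Cf)
  ultimately show ?thesis by blast
qed

definition orthon :: "'i set \<Rightarrow> ('i \<Rightarrow> nat \<Rightarrow> complex) \<Rightarrow> bool" where
  "orthon I v \<longleftrightarrow> (\<forall>i\<in>I. v i \<in> l2) \<and> (\<forall>i\<in>I. \<forall>i'\<in>I. l2_inner (v i) (v i') = (if i = i' then 1 else 0))"

lemma orthon_seq: "orthonormal_seq u \<Longrightarrow> orthon I u"
  by (simp add: orthon_def orthonormal_seq_def)

lemma inner_orth_sum_sum:
  assumes "finite I" "orthon I v"
  shows "l2_inner (\<lambda>k. \<Sum>i\<in>I. a i * v i k) (\<lambda>k. \<Sum>i\<in>I. b i * v i k) = (\<Sum>i\<in>I. a i * cnj (b i))"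
proof -
  have l: "\<forall>i\<in>I. v i \<in> l2" using assms by (simp add: orthon_def)
  have s: "(\<lambda>k. \<Sum>i\<in>I. b i * v i k) \<in> l2" using assms l by (intro l2_sum) auto
  have "l2_inner (\<lambda>k. \<Sum>i\<in>I. a i * v i k) (\<lambda>k. \<Sum>i\<in>I. b i * v i k) = (\<Sum>i\<in>I. a i * l2_inner (v i) (\<lambda>k. \<Sum>i\<in>I. b i * v i k))"
    using inner_sum_left[OF assms(1) l s] .
  also have "\<dots> = (\<Sum>i\<in>I. a i * (\<Sum>i'\<in>I. cnj (b i') * l2_inner (v i) (v i')))"
    using inner_sum_right[OF assms(1) l] l by simp
  also have "\<dots> = (\<Sum>i\<in>I. a i * cnj (b i))"
  proof (rule sum.cong[OF refl])
    fix i assume i: "i \<in> I"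
    have "(\<Sum>i'\<in>I. cnj (b i') * l2_inner (v i) (v i')) = (\<Sum>i'\<in>I. if i = i' then cnj (b i') else 0)"
      using assms(2) i by (intro sum.cong refl) (auto simp: orthon_def)
    also have "\<dots> = cnj (b i)" using assms(1) i by (simp add: sum.delta)
    finally show "a i * (\<Sum>i'\<in>I. cnj (b i') * l2_inner (v i) (v i')) = a i * cnj (b i)" by simp
  qed
  finally show ?thesis .
qed

lemma norm_orth_sum:
  assumes "finite I" "orthon I v"
  shows "(l2_norm (\<lambda>k. \<Sum>i\<in>I. a i * v i k))^2 = (\<Sum>i\<in>I. (cmod (a i))^2)"
proof -
  have l: "\<forall>i\<in>I. v i \<in> l2" using assms by (simp add: orthon_def)
  have s: "(\<lambda>k. \<Sum>i\<in>I. a i * v i k) \<in> l2" using assms l by (intro l2_sum) auto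
  have "(l2_norm (\<lambda>k. \<Sum>i\<in>I. a i * v i k))^2 = Re (\<Sum>i\<in>I. a i * cnj (a i))"
    using norm_sq_re[OF s] inner_orth_sum_sum[OF assms] by simp
  also have "\<dots> = (\<Sum>i\<in>I. (cmod (a i))^2)"
    by (simp add: complex_norm_square[symmetric])
  finally show ?thesis .
qed

lemma re_mult_cnj: "Re (cnj z * z) = (cmod z)^2"
  using cmod_power2[of z] by (simp add: power2_eq_square)

lemma bessel:
  assumes "z \<in> l2" "finite I" "orthon I v"
  shows "(\<Sum>i\<in>I. (cmod (l2_inner z (v i)))^2) \<le> (l2_norm z)^2"
proof -
  define a where "a i = l2_inner z (v i)" for i
  have l: "\<forall>i\<in>I. v i \<in> l2" using assms by (simp add: orthon_def)
  define S where "S = (\<lambda>k. \<Sum>i\<in>I. a i * v i k)"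
  have s: "S \<in> l2" unfolding S_def using assms l by (intro l2_sum) auto
  define d where "d = (\<lambda>k. 1 * z k + (-1) * S k)"
  have d: "d \<in> l2" unfolding d_def using assms(1) s by (rule l2_lin)
  have zS: "l2_inner z S = (\<Sum>i\<in>I. cnj (a i) * a i)"
    unfolding S_def by (simp add: inner_sum_right[OF assms(2) l assms(1)] a_def)
  have Sz: "l2_inner S z = (\<Sum>i\<in>I. cnj (a i) * a i)"
  proof -
    have "l2_inner S z = (\<Sum>i\<in>I. a i * l2_inner (v i) z)"
      unfolding S_def by (rule inner_sum_left[OF assms(2) l assms(1)])
    also have "\<dots> = (\<Sum>i\<in>I. cnj (a i) * a i)"
    proof (rule sum.cong[OF refl])
      fix i assume "i \<in> I"
      hence "l2_inner (v i) z = cnj (a i)" using inner_cnj[of z "v i"] l assms(1) by (simp add: a_def)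
      thus "a i * l2_inner (v i) z = cnj (a i) * a i" by simp
    qed
    finally show ?thesis .
  qed
  have SS: "l2_inner S S = (\<Sum>i\<in>I. cnj (a i) * a i)"
    unfolding S_def using inner_orth_sum_sum[OF assms(2,3), of a a] by (simp add: mult.commute)
  have "l2_inner d d = l2_inner z z - l2_inner z S - l2_inner S z + l2_inner S S"
    unfolding d_def
    using inner_lin_left[OF assms(1) s d, of 1 "-1"] inner_lin_right[OF assms(1) s assms(1), of 1 "-1"]
      inner_lin_right[OF assms(1) s s, of 1 "-1"] d unfolding d_def by simp
  also have "\<dots> = l2_inner z z - (\<Sum>i\<in>I. cnj (a i) * a i)"
    using zS Sz SS by simp
  finally have "Re (l2_inner d d) = Re (l2_inner z z) - (\<Sum>i\<in>I. Re (cnj (a i) * a i))"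
    by (simp add: Re_sum)
  moreover have "(\<Sum>i\<in>I. Re (cnj (a i) * a i)) = (\<Sum>i\<in>I. (cmod (a i))^2)"
    by (rule sum.cong[OF refl]) (rule re_mult_cnj)
  ultimately have "(l2_norm d)^2 = (l2_norm z)^2 - (\<Sum>i\<in>I. (cmod (a i))^2)"
    using norm_sq_re[OF d] norm_sq_re[OF assms(1)] by linarith
  hence "0 \<le> (l2_norm z)^2 - (\<Sum>i\<in>I. (cmod (a i))^2)"
    by (metis zero_le_power2)
  thus ?thesis by (simp add: a_def)
qed

lemma norm_of_orthonormal: "orthonormal_seq u \<Longrightarrow> l2_norm (u k) = 1"
proof -
  assume u: "orthonormal_seq u"
  hence l: "u k \<in> l2" and e: "l2_inner (u k) (u k) = 1" by (auto simp: orthonormal_seq_def)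
  hence "complex_of_real ((l2_norm (u k))^2) = 1" using inner_self[OF l] by metis
  hence "(l2_norm (u k))^2 = 1" using of_real_eq_1_iff by blast
  thus ?thesis using l2_norm_nonneg[OF l] by (simp add: power2_eq_1_iff)
qed

lemma sq_tendsto_zero: "(\<lambda>k. (cmod (f k))^2) \<longlonglongrightarrow> 0 \<Longrightarrow> f \<longlonglongrightarrow> (0::complex)"
proof -
  assume "(\<lambda>k. (cmod (f k))^2) \<longlonglongrightarrow> 0"
  hence "(\<lambda>k. sqrt ((cmod (f k))^2)) \<longlonglongrightarrow> sqrt 0" by (rule tendsto_real_sqrt)
  hence "(\<lambda>k. cmod (f k)) \<longlonglongrightarrow> 0" by simp
  thus ?thesis by (simp add: tendsto_norm_zero_iff)
qed

lemma bessel_seq: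
  assumes "orthonormal_seq u" "z \<in> l2"
  shows "(\<lambda>k. l2_inner z (u k)) \<longlonglongrightarrow> 0"
proof -
  have "summable (\<lambda>k. (cmod (l2_inner z (u k)))^2)"
  proof (rule summableI_nonneg_bounded)
    fix n show "(\<Sum>k<n. (cmod (l2_inner z (u k)))^2) \<le> (l2_norm z)^2"
      using bessel[OF assms(2) _ orthon_seq[OF assms(1)]] by simp
  qed simp
  hence "(\<lambda>k. (cmod (l2_inner z (u k)))^2) \<longlonglongrightarrow> 0" by (rule summable_LIMSEQ_zero)
  thus ?thesis by (rule sq_tendsto_zero)
qed

lemma compact_diag:
  assumes K: "compact_op K" and u: "orthonormal_seq u"
  shows "(\<lambda>k. l2_inner (K (u k)) (u k)) \<longlonglongrightarrow> 0"
proof (rule ccontr)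
  define a where "a k = l2_inner (K (u k)) (u k)" for k
  assume "\<not> (\<lambda>k. l2_inner (K (u k)) (u k)) \<longlonglongrightarrow> 0"
  hence "\<not> a \<longlonglongrightarrow> 0" by (simp add: a_def[abs_def])
  then obtain e where e: "e > 0" "\<forall>no. \<exists>n\<ge>no. \<not> norm (a n - 0) < e"
    unfolding LIMSEQ_iff by blast
  define S where "S = {k. e \<le> cmod (a k)}"
  have "\<forall>m. \<exists>n\<ge>m. n \<in> S"
  proof
    fix m obtain n where "n \<ge> m" "\<not> norm (a n - 0) < e" using e(2) by blast
    thus "\<exists>n\<ge>m. n \<in> S" by (auto simp: S_def not_less)
  qed
  hence "infinite S" by (simp add: infinite_nat_iff_unbounded_le)
  define s where "s = enumerate S"
  have sm: "strict_mono s" and sS: "\<And>i. s i \<in> S"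
    using \<open>infinite S\<close> strict_mono_enumerate range_enumerate unfolding s_def by blast+
  have ul: "\<And>k. u k \<in> l2" using u by (simp add: orthonormal_seq_def)
  have bop: "bounded_op K" using K by (simp add: compact_op_def)
  have "\<exists>r z. strict_mono r \<and> z \<in> l2 \<and> (\<lambda>i. l2_norm (\<lambda>k. K (u (s (r i))) k - z k)) \<longlonglongrightarrow> 0"
  proof -
    have c: "\<forall>x::nat \<Rightarrow> (nat \<Rightarrow> complex). (\<forall>i. x i \<in> l2) \<and> (\<exists>B. \<forall>i. l2_norm (x i) \<le> B) \<longrightarrow>
        (\<exists>r z. strict_mono r \<and> z \<in> l2 \<and> (\<lambda>i. l2_norm (\<lambda>k. K (x (r i)) k - z k)) \<longlonglongrightarrow> 0)"
      using K by (simp add: compact_op_def)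
    have "(\<forall>i. u (s i) \<in> l2) \<and> (\<exists>B. \<forall>i. l2_norm (u (s i)) \<le> B)"
      using ul norm_of_orthonormal[OF u] by auto
    thus ?thesis using c[rule_format, of "\<lambda>i. u (s i)"] by simp
  qed
  then obtain r z where r: "strict_mono r" "z \<in> l2" "(\<lambda>i. l2_norm (\<lambda>k. K (u (s (r i))) k - z k)) \<longlonglongrightarrow> 0"
    by blast
  have t1: "(\<lambda>i. l2_inner z (u (s (r i)))) \<longlonglongrightarrow> 0"
    using LIMSEQ_subseq_LIMSEQ[OF bessel_seq[OF u r(2)] strict_mono_o[OF sm r(1)]] by (simp add: o_def)
  have eq: "a (s (r i)) = l2_inner (\<lambda>k. K (u (s (r i))) k - z k) (u (s (r i))) + l2_inner z (u (s (r i)))" for i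
    using inner_lin_left[OF bop_l2[OF bop ul] r(2) ul, where a=1 and b="-1"] by (simp add: a_def)
  have bnd: "cmod (l2_inner (\<lambda>k. K (u (s (r i))) k - z k) (u (s (r i)))) \<le> l2_norm (\<lambda>k. K (u (s (r i))) k - z k)" for i
    using cauchy_schwarz[OF l2_diff[OF bop_l2[OF bop ul] r(2)] ul] norm_of_orthonormal[OF u] by simp
  have t2: "(\<lambda>i. l2_inner (\<lambda>k. K (u (s (r i))) k - z k) (u (s (r i)))) \<longlonglongrightarrow> 0"
    by (rule Lim_null_comparison[OF _ r(3)]) (intro always_eventually allI bnd)
  have "(\<lambda>i. a (s (r i))) \<longlonglongrightarrow> 0" unfolding eq using tendsto_add[OF t2 t1] by simp
  hence "(\<lambda>i. cmod (a (s (r i)))) \<longlonglongrightarrow> 0" by (simp add: tendsto_norm_zero_iff)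
  moreover have "\<forall>i. e \<le> cmod (a (s (r i)))" using sS unfolding S_def by blast
  ultimately have "e \<le> 0" by (intro LIMSEQ_le_const) auto
  thus False using e(1) by simp
qed

lemma subset_dir:
  fixes T K :: "'n::finite \<Rightarrow> (nat \<Rightarrow> complex) \<Rightarrow> (nat \<Rightarrow> complex)"
  assumes T: "\<forall>j. bounded_op (T j)" and K: "\<forall>j. compact_op (K j)"
    and lam: "lam \<in> D_const (\<lambda>j x. (\<lambda>k. T j x k + K j x k))"
  shows "lam \<in> ess_num_range T"
proof -
  obtain u where u: "orthonormal_basis u" "\<forall>k j. l2_inner (\<lambda>m. T j (u k) m + K j (u k) m) (u k) = lam $ j"
    using lam by (auto simp: D_const_def)
  have us: "orthonormal_seq u" using u by (simp add: orthonormal_basis_def)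
  have ul: "\<And>k. u k \<in> l2" using us by (simp add: orthonormal_seq_def)
  have "(\<lambda>k. l2_inner (T j (u k)) (u k)) \<longlonglongrightarrow> lam $ j" for j
  proof -
    have kb: "bounded_op (K j)" using K by (simp add: compact_op_def)
    have e: "l2_inner (T j (u k)) (u k) = lam $ j - l2_inner (K j (u k)) (u k)" for k
    proof -
      have "l2_inner (\<lambda>m. 1 * T j (u k) m + 1 * K j (u k) m) (u k) = 1 * l2_inner (T j (u k)) (u k) + 1 * l2_inner (K j (u k)) (u k)"
        by (rule inner_lin_left[OF bop_l2[OF T[rule_format] ul] bop_l2[OF kb ul] ul])
      hence "lam $ j = l2_inner (T j (u k)) (u k) + l2_inner (K j (u k)) (u k)" using u(2) by simp
      thus ?thesis by simp
    qed
    show ?thesis unfolding e using tendsto_diff[OF tendsto_const compact_diag[OF K[rule_format] us]] by simp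
  qed
  thus ?thesis using us by (auto simp: ess_num_range_def)
qed

lemma infinite_subseq:
  fixes a :: "nat \<Rightarrow> complex"
  assumes "\<not> a \<longlonglongrightarrow> 0"
  shows "\<exists>e>0. infinite {k. e \<le> cmod (a k)}"
proof -
  obtain e where e: "e > 0" "\<forall>no. \<exists>n\<ge>no. \<not> norm (a n - 0) < e"
    using assms unfolding LIMSEQ_iff by blast
  have "\<forall>m. \<exists>n\<ge>m. n \<in> {k. e \<le> cmod (a k)}"
  proof
    fix m obtain n where "n \<ge> m" "\<not> norm (a n - 0) < e" using e(2) by blast
    thus "\<exists>n\<ge>m. n \<in> {k. e \<le> cmod (a k)}" by (auto simp: not_less)
  qed
  hence "infinite {k. e \<le> cmod (a k)}" by (simp add: infinite_nat_iff_unbounded_le)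
  thus ?thesis using e(1) by blast
qed

lemma avg_lemma:
  assumes T: "bounded_op T" and x: "orthonormal_seq x" and z: "z \<in> l2"
  shows "(\<lambda>k. l2_inner (T (x k)) z) \<longlonglongrightarrow> 0"
proof (rule ccontr)
  define phi where "phi k = l2_inner (T (x k)) z" for k
  assume "\<not> (\<lambda>k. l2_inner (T (x k)) z) \<longlonglongrightarrow> 0"
  hence "\<not> phi \<longlonglongrightarrow> 0" by (simp add: phi_def[abs_def])
  then obtain e where e: "e > 0" "infinite {k. e \<le> cmod (phi k)}" using infinite_subseq by blast
  obtain C where C: "C \<ge> 0" "\<forall>x\<in>l2. l2_norm (T x) \<le> C * l2_norm x" using bop_bound[OF T] by blast
  define D where "D = C * l2_norm z"
  have D0: "D \<ge> 0" unfolding D_def using C(1) l2_norm_nonneg[OF z] by simp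
  define M where "M = nat \<lceil>(D/e)^2\<rceil> + 1"
  obtain F where F: "finite F" "card F = M" "F \<subseteq> {k. e \<le> cmod (phi k)}"
    using infinite_arbitrarily_large[OF e(2)] by blast
  have xl: "\<And>k. x k \<in> l2" using x by (simp add: orthonormal_seq_def)
  define w where "w k = cnj (phi k) / complex_of_real (cmod (phi k))" for k
  have pos: "k \<in> F \<Longrightarrow> cmod (phi k) > 0" for k using F(3) e(1) by force
  have wphi: "w k * phi k = complex_of_real (cmod (phi k))" if "k \<in> F" for k
  proof -
    have "w k * phi k = complex_of_real ((cmod (phi k))^2) / complex_of_real (cmod (phi k))"
      unfolding w_def using complex_norm_square[of "phi k"] by (simp add: mult.commute)
    also have "\<dots> = complex_of_real (cmod (phi k))" using pos[OF that]
      by (simp add: power2_eq_square)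
    finally show ?thesis .
  qed
  have wn: "cmod (w k) = 1" if "k \<in> F" for k
    unfolding w_def using pos[OF that] by (simp add: norm_divide)
  define s where "s = (\<lambda>m. \<Sum>k\<in>F. w k * x k m)"
  have sl: "s \<in> l2" unfolding s_def using F(1) xl by (intro l2_sum) auto
  have Ts: "T s = (\<lambda>m. \<Sum>k\<in>F. w k * T (x k) m)" unfolding s_def using bop_sum[OF T F(1)] xl by simp
  have "l2_inner (T s) z = (\<Sum>k\<in>F. w k * phi k)"
    unfolding Ts phi_def using inner_sum_left[OF F(1) _ z, of "\<lambda>k. T (x k)"] bop_l2[OF T xl] by simp
  also have "\<dots> = (\<Sum>k\<in>F. complex_of_real (cmod (phi k)))" using wphi by simp
  also have "\<dots> = complex_of_real (\<Sum>k\<in>F. cmod (phi k))" by (rule of_real_sum[symmetric])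
  finally have "cmod (l2_inner (T s) z) = cmod (complex_of_real (\<Sum>k\<in>F. cmod (phi k)))" by (simp only:)
  hence e1: "cmod (l2_inner (T s) z) = (\<Sum>k\<in>F. cmod (phi k))" by (simp only: norm_of_real) (simp add: sum_nonneg)
  have "(\<Sum>k\<in>F. e) \<le> (\<Sum>k\<in>F. cmod (phi k))" using F(3) by (intro sum_mono) auto
  hence lo: "M * e \<le> cmod (l2_inner (T s) z)" using e1 F(2) by simp
  have ns: "(l2_norm s)^2 = M"
    unfolding s_def using norm_orth_sum[OF F(1) orthon_seq[OF x], of w] wn F(2) by simp
  have "cmod (l2_inner (T s) z) \<le> l2_norm (T s) * l2_norm z" by (rule cauchy_schwarz[OF bop_l2[OF T sl] z])
  also have "\<dots> \<le> C * l2_norm s * l2_norm z"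
    using C(2) sl l2_norm_nonneg[OF z] by (simp add: mult_right_mono)
  finally have "M * e \<le> D * l2_norm s" using lo by (simp add: D_def algebra_simps)
  moreover have "l2_norm s = sqrt M" using ns l2_norm_nonneg[OF sl] by (metis real_sqrt_unique)
  moreover have Mpos: "M > 0" unfolding M_def by simp
  ultimately have "M * e \<le> D * sqrt M" by simp
  moreover have "real M = sqrt M * sqrt M" by simp
  ultimately have "sqrt M * (sqrt M * e) \<le> sqrt M * D" by (metis mult.assoc mult.commute)
  moreover have "sqrt M > 0" using Mpos by simp
  ultimately have "sqrt M * e \<le> D" by (rule mult_left_le_imp_le)
  hence "(sqrt M * e)^2 \<le> D^2" using e(1) by (intro power_mono) auto
  hence "M * e^2 \<le> D^2" by (simp add: power_mult_distrib)
  hence "M \<le> (D/e)^2" using e(1) by (simp add: field_simps power_divide)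
  moreover have "(D/e)^2 < M" unfolding M_def by linarith
  ultimately show False by simp
qed

lemma coord_decay:
  assumes x: "orthonormal_seq x" shows "(\<lambda>k. x k m) \<longlonglongrightarrow> 0"
proof -
  define e where "e = (\<lambda>i. if i = m then (1::complex) else 0)"
  have ef: "fsupp (Suc m) e" by (simp add: fsupp_def e_def)
  have "(\<lambda>k. l2_inner e (x k)) \<longlonglongrightarrow> 0" by (rule bessel_seq[OF x l2_fsupp[OF ef]])
  moreover have "l2_inner e (x k) = cnj (x k m)" for k
  proof -
    have "l2_inner e (x k) = (\<Sum>i<Suc m. e i * cnj (x k i))" by (rule inner_fsupp_left[OF ef])
    also have "\<dots> = cnj (x k m)" by (simp add: e_def if_distrib sum.delta)
    finally show ?thesis .
  qed
  ultimately have "(\<lambda>k. cnj (x k m)) \<longlonglongrightarrow> 0" by simp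
  hence "(\<lambda>k. cnj (cnj (x k m))) \<longlonglongrightarrow> cnj 0" by (rule tendsto_cnj)
  thus ?thesis by simp
qed

lemma inner_scale_left: "x \<in> l2 \<Longrightarrow> z \<in> l2 \<Longrightarrow> l2_inner (\<lambda>k. c * x k) z = c * l2_inner x z"
  using inner_lin_left[of x x z c 0] by simp
lemma inner_scale_right: "x \<in> l2 \<Longrightarrow> z \<in> l2 \<Longrightarrow> l2_inner z (\<lambda>k. c * x k) = cnj c * l2_inner z x"
  using inner_lin_right[of x x z c 0] by simp
lemma inner_add_left: "x \<in> l2 \<Longrightarrow> y \<in> l2 \<Longrightarrow> z \<in> l2 \<Longrightarrow> l2_inner (\<lambda>k. x k + y k) z = l2_inner x z + l2_inner y z"
  using inner_lin_left[of x y z 1 1] by simp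
lemma inner_add_right: "x \<in> l2 \<Longrightarrow> y \<in> l2 \<Longrightarrow> z \<in> l2 \<Longrightarrow> l2_inner z (\<lambda>k. x k + y k) = l2_inner z x + l2_inner z y"
  using inner_lin_right[of x y z 1 1] by simp
lemma inner_diff_left: "x \<in> l2 \<Longrightarrow> y \<in> l2 \<Longrightarrow> z \<in> l2 \<Longrightarrow> l2_inner (\<lambda>k. x k - y k) z = l2_inner x z - l2_inner y z"
  using inner_lin_left[of x y z 1 "-1"] by simp
lemma inner_diff_right: "x \<in> l2 \<Longrightarrow> y \<in> l2 \<Longrightarrow> z \<in> l2 \<Longrightarrow> l2_inner z (\<lambda>k. x k - y k) = l2_inner z x - l2_inner z y"
  using inner_lin_right[of x y z 1 "-1"] by simp

lemma norm_scale: assumes "x \<in> l2" shows "l2_norm (\<lambda>k. c * x k) = cmod c * l2_norm x"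
proof -
  have l: "(\<lambda>k. c * x k) \<in> l2" using assms by (rule l2_scale)
  have "l2_inner (\<lambda>k. c * x k) (\<lambda>k. c * x k) = c * (cnj c * l2_inner x x)"
    using inner_scale_left[OF assms l] inner_scale_right[OF assms assms] by simp
  hence "(l2_norm (\<lambda>k. c * x k))^2 = Re (cnj c * c) * (l2_norm x)^2"
    using norm_sq_re[OF l] inner_self[OF assms] by (simp add: algebra_simps)
  also have "\<dots> = (cmod c * l2_norm x)^2" by (simp only: re_mult_cnj power_mult_distrib)
  finally show ?thesis
    using l2_norm_nonneg[OF l] l2_norm_nonneg[OF assms]
    by (metis norm_ge_zero power2_eq_imp_eq zero_le_mult_iff)
qed

lemma op_inner_bound:
  assumes "\<forall>x\<in>l2. l2_norm (T x) \<le> C * l2_norm x" "C \<ge> 0" "bounded_op T" "a \<in> l2" "b \<in> l2"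
  shows "cmod (l2_inner (T a) b) \<le> C * l2_norm a * l2_norm b"
proof -
  have "cmod (l2_inner (T a) b) \<le> l2_norm (T a) * l2_norm b" by (rule cauchy_schwarz[OF bop_l2[OF assms(3,4)] assms(5)])
  also have "\<dots> \<le> C * l2_norm a * l2_norm b" using assms l2_norm_nonneg[OF assms(5)] by (simp add: mult_right_mono)
  finally show ?thesis .
qed

lemma finite_norm_bound: "finite Z \<Longrightarrow> Z \<subseteq> l2 \<Longrightarrow> \<exists>B\<ge>0. \<forall>z\<in>Z. l2_norm z \<le> B"
proof -
  assume Z: "finite Z" "Z \<subseteq> l2"
  have "\<forall>z\<in>Z. l2_norm z \<le> (\<Sum>z\<in>Z. l2_norm z)"
    using Z by (auto intro!: member_le_sum l2_norm_nonneg)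
  moreover have "0 \<le> (\<Sum>z\<in>Z. l2_norm z)" using Z by (auto intro!: sum_nonneg l2_norm_nonneg)
  ultimately show ?thesis by blast
qed

lemma tail_small:
  assumes "summable (f::nat \<Rightarrow> real)" "e > 0"
  shows "\<exists>R\<ge>L. suminf f - (\<Sum>m<R. f m) \<le> e"
proof -
  have "(\<lambda>R. \<Sum>m<R. f m) \<longlonglongrightarrow> suminf f" using assms(1) by (rule summable_LIMSEQ)
  then obtain N where N: "\<forall>n\<ge>N. norm ((\<Sum>m<n. f m) - suminf f) < e"
    using assms(2) unfolding LIMSEQ_iff by blast
  hence "norm ((\<Sum>m<max N L. f m) - suminf f) < e" by simp
  thus ?thesis by (intro exI[of _ "max N L"]) auto
qed

lemma tri4: "cmod (a - b - c + d) \<le> cmod a + cmod b + cmod c + cmod d"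
proof -
  have 1: "cmod (a-b-c+d) \<le> cmod (a-b-c) + cmod d" by (rule norm_triangle_ineq)
  have 2: "cmod (a-b-c) \<le> cmod (a-b) + cmod c" by (rule norm_triangle_ineq4)
  have 3: "cmod (a-b) \<le> cmod a + cmod b" by (rule norm_triangle_ineq4)
  from 1 2 3 show ?thesis by linarith
qed

lemma good_vec:
  fixes T :: "'n::finite \<Rightarrow> (nat \<Rightarrow> complex) \<Rightarrow> (nat \<Rightarrow> complex)"
  assumes T: "\<forall>j. bounded_op (T j)" and x: "orthonormal_seq x"
    and lim: "\<forall>j. (\<lambda>k. l2_inner (T j (x k)) (x k)) \<longlonglongrightarrow> lam $ j"
    and eps: "\<epsilon> > 0" and Z: "finite Z" "Z \<subseteq> l2"
  shows "\<exists>y R. fsupp R y \<and> (\<forall>m<L. y m = 0) \<and> l2_norm y = 1 \<and>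
     (\<forall>j. cmod (l2_inner (T j y) y - lam $ j) \<le> \<epsilon>) \<and>
     (\<forall>j. \<forall>z\<in>Z. cmod (l2_inner (T j y) z) \<le> \<epsilon> \<and> cmod (l2_inner (T j z) y) \<le> \<epsilon>)"
proof -
  obtain C where C: "C \<ge> 0" "\<forall>j. \<forall>x\<in>l2. l2_norm (T j x) \<le> C * l2_norm x" using bops_bound[OF T] by blast
  obtain Bz where Bz: "Bz \<ge> 0" "\<forall>z\<in>Z. l2_norm z \<le> Bz" using finite_norm_bound[OF Z] by blast
  define \<eta> where "\<eta> = min (1/2) (\<epsilon> / (3*C + 2 + 2*C*Bz))"
  have den: "3*C + 2 + 2*C*Bz > 0" using C(1) Bz(1) by (simp add: add_pos_nonneg)
  have eta0: "\<eta> > 0" unfolding \<eta>_def using eps den by simp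
  have eta2: "\<eta> \<le> 1/2" unfolding \<eta>_def by (rule min.cobounded1)
  have etae: "\<eta> * (3*C + 2 + 2*C*Bz) \<le> \<epsilon>" unfolding \<eta>_def using den eps
    by (metis min.cobounded2 nonzero_eq_divide_eq not_less_iff_gr_or_eq pos_le_divide_eq)
  have xl: "\<And>k. x k \<in> l2" using x by (simp add: orthonormal_seq_def)
  have Tl: "\<And>j v. v \<in> l2 \<Longrightarrow> T j v \<in> l2" using T bop_l2 by blast
  have ev1: "\<forall>\<^sub>F k in sequentially. \<forall>j. cmod (l2_inner (T j (x k)) (x k) - lam $ j) < \<eta>"
    using lim eta0 by (intro eventually_all_finite) (auto dest!: tendstoD simp: dist_norm)
  have ev2: "\<forall>\<^sub>F k in sequentially. \<forall>j. \<forall>z\<in>Z. cmod (l2_inner (T j (x k)) z) < \<eta>"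
  proof (intro eventually_all_finite allI eventually_ball_finite[OF Z(1)] ballI)
    fix j z assume "z \<in> Z"
    hence "(\<lambda>k. l2_inner (T j (x k)) z) \<longlonglongrightarrow> 0" using avg_lemma[OF T[rule_format] x] Z(2) by blast
    from tendstoD[OF this eta0] show "\<forall>\<^sub>F k in sequentially. cmod (l2_inner (T j (x k)) z) < \<eta>" by (simp add: dist_norm)
  qed
  have ev3: "\<forall>\<^sub>F k in sequentially. \<forall>j. \<forall>z\<in>Z. cmod (l2_inner (T j z) (x k)) < \<eta>"
  proof (intro eventually_all_finite allI eventually_ball_finite[OF Z(1)] ballI)
    fix j z assume "z \<in> Z"
    hence "(\<lambda>k. l2_inner (T j z) (x k)) \<longlonglongrightarrow> 0" using bessel_seq[OF x Tl] Z(2) by blast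
    from tendstoD[OF this eta0] show "\<forall>\<^sub>F k in sequentially. cmod (l2_inner (T j z) (x k)) < \<eta>" by (simp add: dist_norm)
  qed
  have ev4: "\<forall>\<^sub>F k in sequentially. (\<Sum>m<L. (cmod (x k m))^2) < \<eta>^2/2"
  proof -
    have "(\<lambda>k. \<Sum>m<L. (cmod (x k m))^2) \<longlonglongrightarrow> (\<Sum>m<L. (cmod (0::complex))^2)"
      by (intro tendsto_sum tendsto_power tendsto_norm coord_decay[OF x])
    from tendstoD[OF this, of "\<eta>^2/2"] eta0 show ?thesis
      by (auto simp: dist_real_def elim!: eventually_mono)
  qed
  obtain k where k1: "\<forall>j. cmod (l2_inner (T j (x k)) (x k) - lam $ j) < \<eta>"
    and k2: "\<forall>j. \<forall>z\<in>Z. cmod (l2_inner (T j (x k)) z) < \<eta>"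
    and k3: "\<forall>j. \<forall>z\<in>Z. cmod (l2_inner (T j z) (x k)) < \<eta>"
    and k4: "(\<Sum>m<L. (cmod (x k m))^2) < \<eta>^2/2"
    using eventually_happens'[OF trivial_limit_sequentially eventually_conj[OF ev1 eventually_conj[OF ev2 eventually_conj[OF ev3 ev4]]]]
    by blast
  define xx where "xx = x k"
  have xxl: "xx \<in> l2" unfolding xx_def by (rule xl)
  have sx: "summable (\<lambda>m. (cmod (xx m))^2)" using xxl by (simp add: l2_iff)
  have nx: "l2_norm xx = 1" unfolding xx_def by (rule norm_of_orthonormal[OF x])
  have sumx: "(\<Sum>m. (cmod (xx m))^2) = 1" using l2_norm_sq[OF xxl] nx by simp
  obtain R where R: "R \<ge> L" "(\<Sum>m. (cmod (xx m))^2) - (\<Sum>m<R. (cmod (xx m))^2) \<le> \<eta>^2/2"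
    using tail_small[OF sx, of "\<eta>^2/2" L] eta0 by auto
  define p where "p = (\<lambda>m. if L \<le> m \<and> m < R then xx m else 0)"
  define d where "d = (\<lambda>m. xx m - p m)"
  have pf: "fsupp R p" unfolding fsupp_def p_def by auto
  have pl: "p \<in> l2" by (rule l2_fsupp[OF pf])
  have dl: "d \<in> l2" unfolding d_def using xxl pl by (rule l2_diff)
  have xpd: "xx = (\<lambda>m. p m + d m)" unfolding d_def by simp
  have np2: "(l2_norm p)^2 = (\<Sum>m<R. (cmod (xx m))^2) - (\<Sum>m<L. (cmod (xx m))^2)"
  proof -
    have "(l2_norm p)^2 = (\<Sum>m<R. (cmod (p m))^2)" by (rule norm_fsupp[OF pf])
    also have "\<dots> = (\<Sum>m<R. if L \<le> m then (cmod (xx m))^2 else 0)"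
      by (intro sum.cong refl) (auto simp: p_def)
    also have "\<dots> = (\<Sum>m\<in>{L..<R}. (cmod (xx m))^2)"
      by (subst sum.If_cases) (auto intro!: sum.cong)
    also have "\<dots> = (\<Sum>m<R. (cmod (xx m))^2) - (\<Sum>m<L. (cmod (xx m))^2)"
      using R(1) by (simp add: sum_diff_nat_ivl lessThan_atLeast0)
    finally show ?thesis .
  qed
  have dec: "(l2_norm xx)^2 = (l2_norm p)^2 + (l2_norm d)^2"
  proof -
    have pw: "(cmod (xx m))^2 = (cmod (p m))^2 + (cmod (d m))^2" for m
      by (simp add: p_def d_def)
    have "(\<Sum>m. (cmod (xx m))^2) = (\<Sum>m. (cmod (p m))^2) + (\<Sum>m. (cmod (d m))^2)"
      unfolding pw using pl dl by (intro suminf_add[symmetric]) (auto simp: l2_iff)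
    thus ?thesis using l2_norm_sq[OF xxl] l2_norm_sq[OF pl] l2_norm_sq[OF dl] by simp
  qed
  have xpos: "(\<Sum>m<L. (cmod (xx m))^2) \<ge> 0" by (simp add: sum_nonneg)
  have npl: "(l2_norm p)^2 \<ge> 1 - \<eta>^2" using np2 R(2) sumx k4 unfolding xx_def by linarith
  have nd2: "(l2_norm d)^2 \<le> \<eta>^2" using dec nx npl by simp
  have nd: "l2_norm d \<le> \<eta>" by (rule power2_le_imp_le[OF nd2]) (use eta0 in simp)
  have nx2: "(l2_norm xx)^2 = 1" using nx by simp
  have np1: "(l2_norm p)^2 \<le> 1" using dec nx2 zero_le_power2[of "l2_norm d"] by linarith
  have "\<eta>^2 \<le> (1/2)^2" by (rule power_mono[OF eta2]) (use eta0 in simp)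
  hence eta_sq: "\<eta>^2 \<le> 1/4" by (simp add: power2_eq_square)
  have np34: "(l2_norm p)^2 \<ge> 3/4" using npl eta_sq by linarith
  have nphalf: "l2_norm p \<ge> 1/2"
  proof (rule power2_le_imp_le)
    show "(1/2)^2 \<le> (l2_norm p)^2" using np34 by (simp add: power2_eq_square)
  qed (rule l2_norm_nonneg[OF pl])
  have nple1: "l2_norm p \<le> 1" using np1 l2_norm_nonneg[OF pl] by (simp add: power_le_one_iff)
  define np where "np = l2_norm p"
  define c where "c = complex_of_real (1/np)"
  define y where "y = (\<lambda>m. c * p m)"
  have yl: "y \<in> l2" unfolding y_def using pl by (rule l2_scale)
  have cn: "cmod c = 1/np" unfolding c_def norm_of_real using nphalf by (simp add: np_def)
  have ccnj: "c * cnj c = complex_of_real (1/np^2)" unfolding c_def by (simp add: power2_eq_square)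
  have yf: "fsupp R y" using pf by (simp add: fsupp_def y_def)
  have y0: "\<forall>m<L. y m = 0" by (simp add: y_def p_def)
  have ny: "l2_norm y = 1" unfolding y_def norm_scale[OF pl] cn using nphalf by (simp add: np_def)
  have Txx: "T j xx = (\<lambda>m. T j p m + T j d m)" for j using bop_add[OF T[rule_format] pl dl] xpd by simp
  have Ty: "T j y = (\<lambda>m. c * T j p m)" for j unfolding y_def by (rule bop_scale[OF T[rule_format] pl])
  have Tp: "T j p = (\<lambda>m. T j xx m - T j d m)" for j using Txx by simp
  have bnd: "\<And>j a b. a \<in> l2 \<Longrightarrow> b \<in> l2 \<Longrightarrow> cmod (l2_inner (T j a) b) \<le> C * l2_norm a * l2_norm b"
    using op_inner_bound C T by blast
  have npos: "np > 0" using nphalf np_def by simp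
  have res1: "cmod (l2_inner (T j y) y - lam $ j) \<le> \<epsilon>" for j
  proof -
    define A where "A = l2_inner (T j p) p"
    define X where "X = l2_inner (T j xx) xx"
    have "l2_inner (T j y) y = l2_inner (\<lambda>m. c * T j p m) y" by (simp only: Ty)
    also have "\<dots> = c * l2_inner (T j p) y" by (rule inner_scale_left[OF Tl[OF pl] yl])
    also have "l2_inner (T j p) y = cnj c * A" unfolding y_def A_def by (rule inner_scale_right[OF pl Tl[OF pl]])
    also have "c * (cnj c * A) = (c * cnj c) * A" by (simp only: mult.assoc)
    also have "\<dots> = complex_of_real (1/np^2) * A" by (simp only: ccnj)
    also have "\<dots> = A / complex_of_real (np^2)" using npos by (simp add: field_simps)
    finally have TyY: "l2_inner (T j y) y = A / complex_of_real (np^2)" .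
    have XA: "X = A + l2_inner (T j p) d + l2_inner (T j d) xx"
    proof -
      have "X = l2_inner (T j p) xx + l2_inner (T j d) xx" unfolding X_def Txx
        by (rule inner_add_left[OF Tl[OF pl] Tl[OF dl] xxl])
      moreover have "l2_inner (T j p) xx = A + l2_inner (T j p) d" unfolding A_def
        by (subst xpd) (rule inner_add_right[OF pl dl Tl[OF pl]])
      ultimately show ?thesis by simp
    qed
    have b1: "cmod (l2_inner (T j p) d) \<le> C * \<eta>"
    proof -
      have "cmod (l2_inner (T j p) d) \<le> C * l2_norm p * l2_norm d" by (rule bnd[OF pl dl])
      also have "\<dots> \<le> C * 1 * \<eta>" using C(1) nple1 nd l2_norm_nonneg[OF pl] l2_norm_nonneg[OF dl]
        by (intro mult_mono) auto
      finally show ?thesis by simp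
    qed
    have b2: "cmod (l2_inner (T j d) xx) \<le> C * \<eta>"
    proof -
      have "cmod (l2_inner (T j d) xx) \<le> C * l2_norm d * l2_norm xx" by (rule bnd[OF dl xxl])
      also have "\<dots> \<le> C * \<eta> * 1" using C(1) nd nx l2_norm_nonneg[OF dl] by (intro mult_mono) auto
      finally show ?thesis by simp
    qed
    have bA: "cmod A \<le> C * np^2" unfolding A_def np_def using bnd[OF pl pl] by (simp add: power2_eq_square mult.assoc)
    have np0: "np > 0" using nphalf np_def by simp
    have "A / complex_of_real (np^2) - A = A * complex_of_real ((1 - np^2)/np^2)"
      using np0 by (simp add: field_simps)
    hence b3: "cmod (A / complex_of_real (np^2) - A) \<le> C * \<eta>^2"
    proof -
      assume eq: "A / complex_of_real (np^2) - A = A * complex_of_real ((1 - np^2)/np^2)"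
      have nn: "0 \<le> (1 - np^2)/np^2" using np1 np0 by (simp add: np_def)
      have "cmod (A / complex_of_real (np^2) - A) = cmod A * ((1 - np^2)/np^2)"
        unfolding eq norm_mult norm_of_real using nn by (simp only: abs_of_nonneg)
      also have "\<dots> \<le> C * np^2 * ((1 - np^2)/np^2)" using bA nn by (rule mult_right_mono)
      also have "\<dots> = C * (1 - np^2)" using np0 by simp
      also have "\<dots> \<le> C * \<eta>^2" using C(1) npl by (intro mult_left_mono) (auto simp: np_def)
      finally show ?thesis .
    qed
    have b4: "cmod (X - lam $ j) \<le> \<eta>" using k1 unfolding X_def xx_def by (simp add: less_imp_le)
    have "l2_inner (T j y) y - lam $ j = (A / complex_of_real (np^2) - A) - l2_inner (T j p) d - l2_inner (T j d) xx + (X - lam $ j)"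
      using TyY XA by simp
    hence "cmod (l2_inner (T j y) y - lam $ j) \<le> cmod (A / complex_of_real (np^2) - A) + cmod (l2_inner (T j p) d) + cmod (l2_inner (T j d) xx) + cmod (X - lam $ j)"
      by (simp only: tri4)
    also have "\<dots> \<le> C * \<eta>^2 + C * \<eta> + C * \<eta> + \<eta>" using b1 b2 b3 b4 by linarith
    also have "\<dots> \<le> \<eta> * (3*C + 2 + 2*C*Bz)"
    proof -
      have "C * \<eta>^2 \<le> C * \<eta>" using C(1) eta0 eta2 by (intro mult_left_mono) (auto simp: power2_eq_square)
      moreover have "0 \<le> C*Bz*\<eta>" using eta0 C(1) Bz(1) by simp
      moreover have "\<eta> * (3*C + 2 + 2*C*Bz) = 3*(C*\<eta>) + 2*\<eta> + 2*(C*Bz*\<eta>)" by (simp add: algebra_simps)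
      ultimately show ?thesis using eta0 by linarith
    qed
    also have "\<dots> \<le> \<epsilon>" by (rule etae)
    finally show ?thesis .
  qed
  have res2: "cmod (l2_inner (T j y) z) \<le> \<epsilon> \<and> cmod (l2_inner (T j z) y) \<le> \<epsilon>" if z: "z \<in> Z" for j z
  proof -
    have zl: "z \<in> l2" using z Z(2) by blast
    have nz: "l2_norm z \<le> Bz" using Bz z by blast
    have np0: "np > 0" using nphalf np_def by simp
    have inv2: "1/np \<le> 2" using nphalf np_def by (simp add: field_simps)
    have e1: "l2_inner (T j y) z = c * (l2_inner (T j xx) z - l2_inner (T j d) z)"
      unfolding Ty using inner_scale_left[OF Tl[OF pl] zl] Tp inner_diff_left[OF Tl[OF xxl] Tl[OF dl] zl] by simp
    have e2: "l2_inner (T j z) y = cnj c * (l2_inner (T j z) xx - l2_inner (T j z) d)"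
      unfolding y_def using inner_scale_right[OF pl Tl[OF zl]] xpd inner_diff_right[OF xxl dl Tl[OF zl]]
      by (simp add: d_def)
    have q1: "cmod (l2_inner (T j xx) z) \<le> \<eta>" using k2 z unfolding xx_def by (simp add: less_imp_le)
    have q2: "cmod (l2_inner (T j z) xx) \<le> \<eta>" using k3 z unfolding xx_def by (simp add: less_imp_le)
    have q3: "cmod (l2_inner (T j d) z) \<le> C * \<eta> * Bz"
    proof -
      have "cmod (l2_inner (T j d) z) \<le> C * l2_norm d * l2_norm z" by (rule bnd[OF dl zl])
      also have "\<dots> \<le> C * \<eta> * Bz" using C(1) nd nz l2_norm_nonneg[OF dl] l2_norm_nonneg[OF zl]
        by (intro mult_mono) (auto intro: mult_nonneg_nonneg)
      finally show ?thesis .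
    qed
    have q4: "cmod (l2_inner (T j z) d) \<le> C * \<eta> * Bz"
    proof -
      have "cmod (l2_inner (T j z) d) \<le> C * l2_norm z * l2_norm d" by (rule bnd[OF zl dl])
      also have "\<dots> \<le> C * Bz * \<eta>" using C(1) nd nz l2_norm_nonneg[OF dl] l2_norm_nonneg[OF zl]
        by (intro mult_mono) (auto intro: mult_nonneg_nonneg)
      finally show ?thesis by (simp add: algebra_simps)
    qed
    have fin: "(1/np) * (\<eta> + C * \<eta> * Bz) \<le> \<epsilon>"
    proof -
      have "(1/np) * (\<eta> + C * \<eta> * Bz) \<le> 2 * (\<eta> + C * \<eta> * Bz)"
        using inv2 eta0 C(1) Bz(1) by (intro mult_right_mono) auto
      also have "\<dots> \<le> \<eta> * (3*C + 2 + 2*C*Bz)" using eta0 C(1) by (simp add: algebra_simps)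
      finally show ?thesis using etae by linarith
    qed
    have "cmod (l2_inner (T j xx) z - l2_inner (T j d) z) \<le> \<eta> + C * \<eta> * Bz"
      using norm_triangle_ineq4[of "l2_inner (T j xx) z" "l2_inner (T j d) z"] q1 q3 by linarith
    hence "cmod (l2_inner (T j y) z) \<le> (1/np) * (\<eta> + C * \<eta> * Bz)"
      unfolding e1 norm_mult cn using np0 by (simp add: divide_right_mono)
    moreover have "cmod (l2_inner (T j z) xx - l2_inner (T j z) d) \<le> \<eta> + C * \<eta> * Bz"
      using norm_triangle_ineq4[of "l2_inner (T j z) xx" "l2_inner (T j z) d"] q2 q4 by linarith
    hence "cmod (l2_inner (T j z) y) \<le> (1/np) * (\<eta> + C * \<eta> * Bz)"
      unfolding e2 norm_mult complex_mod_cnj cn using np0 by (simp add: divide_right_mono)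
    ultimately show ?thesis using fin by linarith
  qed
  show ?thesis using yf y0 ny res1 res2 by blast
qed

lemma mix_diag:
  fixes M :: nat and g :: "nat \<Rightarrow> real" and z :: "nat \<Rightarrow> nat \<Rightarrow> complex" and \<delta> :: real
  assumes T: "bounded_op T" and M: "M > 0" and zl: "\<forall>b<M. z b \<in> l2"
    and g1: "(\<Sum>b<M. (g b)^2) = 1" and gb: "\<forall>b<M. \<bar>g b\<bar> \<le> 1"
    and dg: "\<forall>b<M. b \<noteq> 0 \<longrightarrow> cmod (l2_inner (T (z b)) (z b) - \<mu>) \<le> \<delta>"
    and cr: "\<forall>b<M. \<forall>c<M. b \<noteq> c \<longrightarrow> cmod (l2_inner (T (z b)) (z c)) \<le> \<delta>"
    and d0: "\<delta> \<ge> 0"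
  shows "cmod (l2_inner (T (\<lambda>m. \<Sum>b<M. complex_of_real (g b) * z b m)) (\<lambda>m. \<Sum>b<M. complex_of_real (g b) * z b m) - \<mu>)
           \<le> (g 0)^2 * cmod (l2_inner (T (z 0)) (z 0) - \<mu>) + \<delta> + (real M)^2 * \<delta>"
proof -
  define w where "w = (\<lambda>m. \<Sum>b<M. complex_of_real (g b) * z b m)"
  have zl': "\<forall>b\<in>{..<M}. z b \<in> l2" using zl by auto
  have wl: "w \<in> l2" unfolding w_def by (rule l2_sum) (use zl' in auto)
  have Tzl: "\<forall>b\<in>{..<M}. T (z b) \<in> l2" using zl' bop_l2[OF T] by auto
  have Tw: "T w = (\<lambda>m. \<Sum>b<M. complex_of_real (g b) * T (z b) m)"
    unfolding w_def by (rule bop_sum[OF T finite_lessThan zl'])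
  define G where "G b c = l2_inner (T (z b)) (z c)" for b c
  have "l2_inner (T w) w = (\<Sum>b<M. complex_of_real (g b) * l2_inner (T (z b)) w)"
    unfolding Tw by (rule inner_sum_left[OF finite_lessThan Tzl wl])
  also have "\<dots> = (\<Sum>b<M. \<Sum>c<M. complex_of_real (g b * g c) * G b c)"
  proof (rule sum.cong[OF refl])
    fix b assume b: "b \<in> {..<M}"
    have "l2_inner (T (z b)) w = (\<Sum>c<M. cnj (complex_of_real (g c)) * l2_inner (T (z b)) (z c))"
      unfolding w_def by (rule inner_sum_right[OF finite_lessThan zl' bspec[OF Tzl b]])
    thus "complex_of_real (g b) * l2_inner (T (z b)) w = (\<Sum>c<M. complex_of_real (g b * g c) * G b c)"
      by (simp add: sum_distrib_left G_def mult.assoc)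
  qed
  finally have ip: "l2_inner (T w) w = (\<Sum>b<M. \<Sum>c<M. complex_of_real (g b * g c) * G b c)" .
  define E where "E b c = G b c - (if b = c then \<mu> else 0)" for b c
  have "(\<Sum>b<M. \<Sum>c<M. complex_of_real (g b * g c) * E b c)
      = (\<Sum>b<M. \<Sum>c<M. complex_of_real (g b * g c) * G b c) - (\<Sum>b<M. \<Sum>c<M. complex_of_real (g b * g c) * (if b = c then \<mu> else 0))"
    unfolding E_def by (simp add: algebra_simps sum_subtractf)
  also have "(\<Sum>b<M. \<Sum>c<M. complex_of_real (g b * g c) * (if b = c then \<mu> else 0)) = (\<Sum>b<M. complex_of_real ((g b)^2) * \<mu>)"
    by (intro sum.cong refl) (simp add: if_distrib sum.delta power2_eq_square cong: if_cong)
  also have "\<dots> = complex_of_real (\<Sum>b<M. (g b)^2) * \<mu>" by (simp add: sum_distrib_right)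
  also have "\<dots> = \<mu>" using g1 by simp
  finally have main: "l2_inner (T w) w - \<mu> = (\<Sum>b<M. \<Sum>c<M. complex_of_real (g b * g c) * E b c)" using ip by simp
  define D where "D b = (if b = 0 then (g 0)^2 * cmod (E 0 0) else (g b)^2 * \<delta>)" for b
  have tb: "cmod (complex_of_real (g b * g c) * E b c) \<le> (if b = c then D b else 0) + \<delta>" if "b < M" "c < M" for b c
  proof (cases "b = c")
    case True
    have "cmod (complex_of_real (g b * g c) * E b c) = (g b)^2 * cmod (E b b)"
      using True by (simp add: norm_mult power2_eq_square abs_mult)
    also have "\<dots> \<le> D b"
    proof (cases "b = 0")
      case False
      have "cmod (E b b) \<le> \<delta>" using dg that False by (simp add: E_def G_def)
      thus ?thesis using False by (simp add: D_def mult_left_mono)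
    qed (simp add: D_def)
    finally show ?thesis using True d0 by simp
  next
    case False
    have "cmod (complex_of_real (g b * g c) * E b c) = \<bar>g b\<bar> * \<bar>g c\<bar> * cmod (G b c)"
      using False by (simp add: E_def norm_mult abs_mult)
    also have "\<dots> \<le> 1 * 1 * \<delta>" using gb cr that False
      by (intro mult_mono) (auto simp: G_def)
    finally show ?thesis using False by simp
  qed
  have "cmod (l2_inner (T w) w - \<mu>) \<le> (\<Sum>b<M. \<Sum>c<M. cmod (complex_of_real (g b * g c) * E b c))"
    unfolding main by (rule order_trans[OF norm_sum sum_mono[OF norm_sum]])
  also have "\<dots> \<le> (\<Sum>b<M. \<Sum>c<M. (if b = c then D b else 0) + \<delta>)"
    using tb by (intro sum_mono) auto
  also have "\<dots> = (\<Sum>b<M. D b) + (real M)^2 * \<delta>"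
    by (simp add: sum.distrib sum.delta power2_eq_square)
  also have "(\<Sum>b<M. D b) \<le> (g 0)^2 * cmod (E 0 0) + \<delta>"
  proof -
    have "(\<Sum>b<M. D b) = D 0 + (\<Sum>b\<in>{1..<M}. D b)"
      using M by (simp add: lessThan_atLeast0 sum.atLeast_Suc_lessThan)
    also have "(\<Sum>b\<in>{1..<M}. D b) = \<delta> * (\<Sum>b\<in>{1..<M}. (g b)^2)"
      by (simp add: D_def sum_distrib_left mult.commute)
    also have "(\<Sum>b\<in>{1..<M}. (g b)^2) \<le> (\<Sum>b<M. (g b)^2)"
      by (rule sum_mono2) auto
    hence "\<delta> * (\<Sum>b\<in>{1..<M}. (g b)^2) \<le> \<delta>" using g1 d0 by (metis mult_left_mono mult.right_neutral)
    finally show ?thesis by (simp add: D_def)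
  qed
  finally show ?thesis unfolding w_def[symmetric] by (simp add: E_def G_def)
qed

definition hv :: "nat \<Rightarrow> nat \<Rightarrow> real" where "hv M b = (if b = 0 then 1 else 0) - 1/sqrt M"
definition hh :: "nat \<Rightarrow> nat \<Rightarrow> nat \<Rightarrow> real" where
  "hh M a b = (if a = b then 1 else 0) - hv M a * hv M b / (1 - 1/sqrt M)"

lemma r_facts: assumes "M \<ge> (2::nat)" shows "0 < 1/sqrt M" "1/sqrt M < 1" "(1/sqrt M)^2 = 1/M" "M * (1/sqrt M)^2 = 1"
proof -
  have "sqrt M > 1" using assms by simp
  thus "0 < 1/sqrt M" "1/sqrt M < 1" by auto
  show "(1/sqrt M)^2 = 1/M" by (simp add: power_divide)
  thus "M * (1/sqrt M)^2 = 1" using assms by simp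
qed

lemma hv_sq: assumes "M \<ge> 2" shows "(\<Sum>b<M. (hv M b)^2) = 2 * (1 - 1/sqrt M)"
proof -
  define r where "r = 1/sqrt M"
  obtain n where n: "M = Suc n" using assms by (cases M) auto
  have "(\<Sum>b<M. (hv M b)^2) = (hv M 0)^2 + (\<Sum>b<n. (hv M (Suc b))^2)"
    unfolding n by (rule sum.lessThan_Suc_shift)
  also have "\<dots> = (1 - r)^2 + n * r^2" by (simp add: hv_def r_def)
  also have "\<dots> = 1 - 2*r + M * r^2" unfolding n by (simp add: power2_eq_square algebra_simps)
  also have "M * r^2 = 1" unfolding r_def using r_facts[OF assms] by simp
  finally show ?thesis by (simp add: r_def)
qed

lemma hh_orth:
  assumes M: "M \<ge> 2" and a: "a < M" and a': "a' < M"
  shows "(\<Sum>b<M. hh M a b * hh M a' b) = (if a = a' then 1 else 0)"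
proof -
  define r where "r = 1/sqrt M"
  define t where "t = 1/(1 - r)"
  have r1: "r < 1" "0 < r" unfolding r_def using r_facts[OF M] by auto
  have pw: "hh M a b * hh M a' b = (if a = b \<and> a' = b then 1 else 0) - t*hv M a'*(if a = b then hv M b else 0)
      - t*hv M a*(if a' = b then hv M b else 0) + t^2*hv M a*hv M a'*(hv M b)^2" for b
    by (auto simp: hh_def t_def r_def power2_eq_square divide_inverse algebra_simps)
  have s1: "(\<Sum>b<M. (if a = b \<and> a' = b then 1 else 0)) = (if a = a' then (1::real) else 0)"
    using a by (cases "a = a'") (auto simp: sum.delta intro!: sum.neutral)
  have s2: "(\<Sum>b<M. (if a = b then hv M b else 0)) = hv M a" using a by (simp add: sum.delta)
  have s3: "(\<Sum>b<M. (if a' = b then hv M b else 0)) = hv M a'" using a' by (simp add: sum.delta)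
  have "(\<Sum>b<M. hh M a b * hh M a' b) = (if a = a' then 1 else 0) - t*hv M a'*hv M a - t*hv M a*hv M a'
       + t^2*hv M a*hv M a'*(\<Sum>b<M. (hv M b)^2)"
    unfolding pw by (simp add: sum.distrib sum_subtractf sum_distrib_left[symmetric] s1 s2 s3)
  also have "(\<Sum>b<M. (hv M b)^2) = 2*(1 - r)" unfolding r_def by (rule hv_sq[OF M])
  also have "t^2*hv M a*hv M a'*(2*(1 - r)) = (t^2*(2*(1-r)))*(hv M a*hv M a')" by (simp only: mult_ac)
  also have "t^2 * (2*(1-r)) = 2*t"
  proof -
    have nz: "1 - r \<noteq> 0" using r1 by simp
    have "t^2 * (2*(1-r)) = 2 * (t * (t * (1 - r)))" by (simp add: power2_eq_square algebra_simps)
    also have "t * (1 - r) = 1" unfolding t_def using nz by simp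
    finally show ?thesis by simp
  qed
  finally show ?thesis by (simp add: algebra_simps)
qed

lemma hh_sym: "hh M a b = hh M b a"
  by (simp add: hh_def mult.commute eq_commute)

lemma hh_col0: assumes M: "M \<ge> 2" shows "hh M a 0 = 1/sqrt M"
proof -
  define r where "r = 1/sqrt M"
  have r1: "r < 1" "0 < r" unfolding r_def using r_facts[OF M] by auto
  show ?thesis
  proof (cases "a = 0")
    case True thus ?thesis using r1 by (simp add: hh_def hv_def r_def[symmetric] power2_eq_square field_simps)
  next
    case False thus ?thesis using r1 by (simp add: hh_def hv_def r_def[symmetric] field_simps)
  qed
qed

lemma hh_bound: assumes M: "M \<ge> 2" "a < M" "b < M" shows "\<bar>hh M a b\<bar> \<le> 1"
proof -
  have "(hh M a b)^2 \<le> (\<Sum>b<M. (hh M a b)^2)"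
    using M by (intro member_le_sum) auto
  also have "\<dots> = 1" using hh_orth[OF M(1,2,2)] by (simp add: power2_eq_square)
  finally show ?thesis by (simp add: abs_square_le_1)
qed

lemma mixing:
  fixes z :: "nat \<Rightarrow> nat \<Rightarrow> complex"
  assumes M: "M \<ge> 2" and oz: "orthon {..<M} z"
  shows "orthon {..<M} (\<lambda>a m. \<Sum>b<M. complex_of_real (hh M a b) * z b m)"
    and "(\<lambda>m. \<Sum>a<M. complex_of_real (1/sqrt M) * (\<Sum>b<M. complex_of_real (hh M a b) * z b m)) = z 0"
proof -
  define w where "w a = (\<lambda>m. \<Sum>b<M. complex_of_real (hh M a b) * z b m)" for a
  have zl: "\<forall>b\<in>{..<M}. z b \<in> l2" using oz by (simp add: orthon_def)
  have wl: "w a \<in> l2" for a unfolding w_def by (rule l2_sum) (use zl in auto)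
  have "l2_inner (w a) (w a') = (if a = a' then 1 else 0)" if "a < M" "a' < M" for a a'
  proof -
    have "l2_inner (w a) (w a') = (\<Sum>b<M. complex_of_real (hh M a b) * cnj (complex_of_real (hh M a' b)))"
      unfolding w_def by (rule inner_orth_sum_sum[OF finite_lessThan oz])
    also have "\<dots> = complex_of_real (\<Sum>b<M. hh M a b * hh M a' b)" by simp
    also have "\<dots> = (if a = a' then 1 else 0)" using hh_orth[OF M that] by simp
    finally show ?thesis .
  qed
  thus "orthon {..<M} (\<lambda>a m. \<Sum>b<M. complex_of_real (hh M a b) * z b m)"
    using wl unfolding w_def orthon_def by auto
  have "(\<Sum>a<M. complex_of_real (1/sqrt M) * (\<Sum>b<M. complex_of_real (hh M a b) * z b m)) = z 0 m" for m
  proof -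
    have "(\<Sum>a<M. complex_of_real (1/sqrt M) * (\<Sum>b<M. complex_of_real (hh M a b) * z b m))
        = (\<Sum>a<M. \<Sum>b<M. complex_of_real (hh M a 0 * hh M a b) * z b m)"
      using hh_col0[OF M] by (simp add: sum_distrib_left mult.assoc)
    also have "\<dots> = (\<Sum>b<M. \<Sum>a<M. complex_of_real (hh M a 0 * hh M a b) * z b m)"
      by (rule sum.swap)
    also have "\<dots> = (\<Sum>b<M. complex_of_real (\<Sum>a<M. hh M a 0 * hh M a b) * z b m)"
      by (simp add: sum_distrib_right)
    also have "\<dots> = (\<Sum>b<M. complex_of_real (\<Sum>a<M. hh M 0 a * hh M b a) * z b m)"
    proof -
      have "\<And>a b. hh M a 0 * hh M a b = hh M 0 a * hh M b a" using hh_sym by metis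
      thus ?thesis by simp
    qed
    also have "\<dots> = (\<Sum>b<M. (if 0 = b then z b m else 0))"
      using hh_orth[OF M] M by (intro sum.cong refl) auto
    also have "\<dots> = z 0 m" using M by (simp add: sum.delta)
    finally show ?thesis .
  qed
  thus "(\<lambda>m. \<Sum>a<M. complex_of_real (1/sqrt M) * (\<Sum>b<M. complex_of_real (hh M a b) * z b m)) = z 0" by auto
qed

lemma fsupp_mono: "fsupp B x \<Longrightarrow> B \<le> B' \<Longrightarrow> fsupp B' x"
  by (simp add: fsupp_def)

lemma disj_orth:
  assumes "\<forall>m<B. y m = 0" "fsupp B v"
  shows "l2_inner y v = 0" "l2_inner v y = 0"
  using assms by (auto simp: inner_fsupp_right[OF assms(2)] inner_fsupp_left[OF assms(2)] intro!: sum.neutral)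

lemma ylist:
  fixes T :: "'n::finite \<Rightarrow> (nat \<Rightarrow> complex) \<Rightarrow> (nat \<Rightarrow> complex)"
  assumes T: "\<forall>j. bounded_op (T j)" and x: "orthonormal_seq x"
    and lim: "\<forall>j. (\<lambda>k. l2_inner (T j (x k)) (x k)) \<longlonglongrightarrow> lam $ j"
    and d: "\<delta> > 0" and Z: "finite Z" "Z \<subseteq> l2"
  shows "\<exists>Y B'. length Y = n \<and>
     (\<forall>b<n. fsupp B' (Y!b) \<and> (\<forall>m<L. (Y!b) m = 0) \<and> l2_norm (Y!b) = 1 \<and>
        (\<forall>j. cmod (l2_inner (T j (Y!b)) (Y!b) - lam $ j) \<le> \<delta>) \<and>
        (\<forall>j. \<forall>z\<in>Z. cmod (l2_inner (T j (Y!b)) z) \<le> \<delta> \<and> cmod (l2_inner (T j z) (Y!b)) \<le> \<delta>)) \<and>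
     (\<forall>b<n. \<forall>c<n. b \<noteq> c \<longrightarrow> (\<forall>j. cmod (l2_inner (T j (Y!b)) (Y!c)) \<le> \<delta>) \<and> l2_inner (Y!b) (Y!c) = 0)"
proof (induction n)
  case 0 show ?case by auto
next
  case (Suc n)
  then obtain Y B' where Y: "length Y = n"
     "\<forall>b<n. fsupp B' (Y!b) \<and> (\<forall>m<L. (Y!b) m = 0) \<and> l2_norm (Y!b) = 1 \<and>
        (\<forall>j. cmod (l2_inner (T j (Y!b)) (Y!b) - lam $ j) \<le> \<delta>) \<and>
        (\<forall>j. \<forall>z\<in>Z. cmod (l2_inner (T j (Y!b)) z) \<le> \<delta> \<and> cmod (l2_inner (T j z) (Y!b)) \<le> \<delta>)"
     "\<forall>b<n. \<forall>c<n. b \<noteq> c \<longrightarrow> (\<forall>j. cmod (l2_inner (T j (Y!b)) (Y!c)) \<le> \<delta>) \<and> l2_inner (Y!b) (Y!c) = 0"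
    by blast
  have Yl: "set Y \<subseteq> l2"
  proof
    fix v assume "v \<in> set Y"
    then obtain i where "i < n" "v = Y!i" using Y(1) by (auto simp: in_set_conv_nth)
    thus "v \<in> l2" using Y(2) l2_fsupp by blast
  qed
  obtain y R where y: "fsupp R y" "\<forall>m<max L B'. y m = 0" "l2_norm y = 1"
     "\<forall>j. cmod (l2_inner (T j y) y - lam $ j) \<le> \<delta>"
     "\<forall>j. \<forall>z\<in>Z \<union> set Y. cmod (l2_inner (T j y) z) \<le> \<delta> \<and> cmod (l2_inner (T j z) y) \<le> \<delta>"
    using good_vec[OF T x lim d, of "Z \<union> set Y" "max L B'"] Z Yl by auto
  define Y' where "Y' = Y @ [y]"
  have nth': "Y' ! b = (if b < n then Y ! b else y)" if "b < Suc n" for b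
    using that Y(1) by (auto simp: Y'_def nth_append)
  have orth_new: "l2_inner y (Y!b) = 0" "l2_inner (Y!b) y = 0" if "b < n" for b
    using disj_orth[of B' y "Y!b"] y(2) Y(2) that by auto
  have inY: "b < n \<Longrightarrow> Y!b \<in> set Y" for b using Y(1) by simp
  have f0: "length Y' = Suc n" using Y(1) by (simp add: Y'_def)
  have f1: "fsupp (max B' R) (Y'!b)" if b: "b < Suc n" for b using Y(2) y(1) b by (auto simp: nth' intro: fsupp_mono)
  have f2: "\<forall>m<L. (Y'!b) m = 0" if b: "b < Suc n" for b using Y(2) y(2) b by (auto simp: nth')
  have f3: "l2_norm (Y'!b) = 1" if b: "b < Suc n" for b using Y(2) y(3) b by (auto simp: nth')
  have f4: "\<forall>j. cmod (l2_inner (T j (Y'!b)) (Y'!b) - lam $ j) \<le> \<delta>" if b: "b < Suc n" for b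
    using Y(2) y(4) b by (auto simp: nth')
  have f5: "\<forall>j. \<forall>z\<in>Z. cmod (l2_inner (T j (Y'!b)) z) \<le> \<delta> \<and> cmod (l2_inner (T j z) (Y'!b)) \<le> \<delta>"
    if b: "b < Suc n" for b using Y(2) y(5) b by (auto simp: nth')
  have f6: "\<forall>j. cmod (l2_inner (T j (Y'!b)) (Y'!c)) \<le> \<delta>" if b: "b < Suc n" and c: "c < Suc n" and bc: "b \<noteq> c" for b c
  proof (cases "b < n")
    case True note bn = True
    show ?thesis
    proof (cases "c < n")
      case True thus ?thesis using Y(3) bn bc b c by (auto simp: nth')
    next
      case False thus ?thesis using y(5) inY[OF bn] bn b c by (auto simp: nth')
    qed
  next
    case False
    hence cn: "c < n" using b c bc by auto
    thus ?thesis using y(5) inY[OF cn] False b c by (auto simp: nth')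
  qed
  have f7: "l2_inner (Y'!b) (Y'!c) = 0" if b: "b < Suc n" and c: "c < Suc n" and bc: "b \<noteq> c" for b c
  proof (cases "b < n")
    case True note bn = True
    show ?thesis
    proof (cases "c < n")
      case True thus ?thesis using Y(3) bn bc b c by (auto simp: nth')
    next
      case False thus ?thesis using orth_new bn b c by (auto simp: nth')
    qed
  next
    case False
    hence cn: "c < n" using b c bc by auto
    thus ?thesis using orth_new False b c by (auto simp: nth')
  qed
  have A: "\<forall>b<Suc n. fsupp (max B' R) (Y'!b) \<and> (\<forall>m<L. (Y'!b) m = 0) \<and> l2_norm (Y'!b) = 1 \<and>
        (\<forall>j. cmod (l2_inner (T j (Y'!b)) (Y'!b) - lam $ j) \<le> \<delta>) \<and>
        (\<forall>j. \<forall>z\<in>Z. cmod (l2_inner (T j (Y'!b)) z) \<le> \<delta> \<and> cmod (l2_inner (T j z) (Y'!b)) \<le> \<delta>)"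
    using f1 f2 f3 f4 f5 by simp
  have B: "\<forall>b<Suc n. \<forall>c<Suc n. b \<noteq> c \<longrightarrow> (\<forall>j. cmod (l2_inner (T j (Y'!b)) (Y'!c)) \<le> \<delta>) \<and> l2_inner (Y'!b) (Y'!c) = 0"
    using f6 f7 by simp
  show ?case by (rule exI[of _ Y'], rule exI[of _ "max B' R"], intro conjI f0 A B)
qed

definition ev :: "nat \<Rightarrow> nat \<Rightarrow> complex" where "ev k = (\<lambda>m. if m = k then 1 else 0)"
definition in_span :: "(nat \<Rightarrow> complex) \<Rightarrow> (nat \<Rightarrow> complex) list \<Rightarrow> bool" where
  "in_span v H \<longleftrightarrow> (\<exists>c. v = (\<lambda>m. \<Sum>i<length H. c i * (H!i) m))"
definition invH :: "nat \<Rightarrow> (nat \<Rightarrow> complex) list \<Rightarrow> nat \<Rightarrow> bool" where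
  "invH s H B \<longleftrightarrow> orthon {..<length H} (\<lambda>i. H!i) \<and> (\<forall>i<length H. fsupp B (H!i)) \<and> (\<forall>k<s. in_span (ev k) H)"

lemma ev_fsupp: "fsupp (Suc k) (ev k)" by (simp add: fsupp_def ev_def)

lemma inner_ev_right: "l2_inner x (ev k) = x k"
proof -
  have "l2_inner x (ev k) = (\<Sum>m<Suc k. x m * cnj (ev k m))" by (rule inner_fsupp_right[OF ev_fsupp])
  also have "\<dots> = x k" by (simp add: ev_def if_distrib sum.delta cong: if_cong)
  finally show ?thesis .
qed

lemma inner_ev_left: "l2_inner (ev k) x = cnj (x k)"
proof -
  have "l2_inner (ev k) x = (\<Sum>m<Suc k. ev k m * cnj (x m))" by (rule inner_fsupp_left[OF ev_fsupp])
  also have "\<dots> = cnj (x k)" by (simp add: ev_def if_distrib sum.delta cong: if_cong)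
  finally show ?thesis .
qed

lemma span_append: assumes "in_span v H" shows "in_span v (H @ W)"
proof -
  obtain c where c: "v = (\<lambda>m. \<Sum>i<length H. c i * (H!i) m)" using assms by (auto simp: in_span_def)
  define c' where "c' i = (if i < length H then c i else 0)" for i
  have "(\<Sum>i<length (H @ W). c' i * ((H @ W)!i) m) = (\<Sum>i<length H. c i * (H!i) m)" for m
  proof -
    have "(\<Sum>i<length (H @ W). c' i * ((H @ W)!i) m) = (\<Sum>i<length H. c' i * ((H @ W)!i) m)"
      by (rule sum.mono_neutral_right) (auto simp: c'_def)
    also have "\<dots> = (\<Sum>i<length H. c i * (H!i) m)" by (intro sum.cong refl) (auto simp: c'_def nth_append)
    finally show ?thesis .
  qed
  thus ?thesis unfolding in_span_def c by (intro exI[of _ c']) auto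
qed

lemma orthon_append:
  assumes "orthon {..<length H} (\<lambda>i. H!i)" "orthon {..<length W} (\<lambda>i. W!i)"
    and "\<forall>i<length H. \<forall>a<length W. l2_inner (H!i) (W!a) = 0"
  shows "orthon {..<length (H @ W)} (\<lambda>i. (H @ W)!i)"
proof -
  have Hl: "\<And>i. i < length H \<Longrightarrow> H!i \<in> l2" and Wl: "\<And>a. a < length W \<Longrightarrow> W!a \<in> l2"
    using assms by (auto simp: orthon_def)
  have rev: "l2_inner (W!a) (H!i) = 0" if "i < length H" "a < length W" for i a
    using inner_cnj[OF Hl[OF that(1)] Wl[OF that(2)]] assms(3) that by simp
  show ?thesis unfolding orthon_def
  proof (intro conjI ballI)
    fix i assume "i \<in> {..<length (H @ W)}"
    thus "(H @ W)!i \<in> l2" using Hl Wl by (auto simp: nth_append)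
  next
    fix i i' assume i: "i \<in> {..<length (H @ W)}" and i': "i' \<in> {..<length (H @ W)}"
    show "l2_inner ((H @ W)!i) ((H @ W)!i') = (if i = i' then 1 else 0)"
    proof (cases "i < length H")
      case True note iH = True
      show ?thesis
      proof (cases "i' < length H")
        case True thus ?thesis using iH assms(1) by (auto simp: nth_append orthon_def)
      next
        case False thus ?thesis using iH i' assms(3) by (auto simp: nth_append)
      qed
    next
      case False note iW = False
      show ?thesis
      proof (cases "i' < length H")
        case True thus ?thesis using iW i rev by (auto simp: nth_append)
      next
        case False
        have "l2_inner (W!(i - length H)) (W!(i' - length H)) = (if i - length H = i' - length H then 1 else 0)"
          using assms(2) i i' iW False by (auto simp: orthon_def)
        moreover have "(i - length H = i' - length H) = (i = i')" using iW False by auto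
        ultimately show ?thesis using iW False by (simp add: nth_append)
      qed
    qed
  qed
qed

lemma fsupp_sum: "finite I \<Longrightarrow> \<forall>i\<in>I. fsupp B (v i) \<Longrightarrow> fsupp B (\<lambda>m. \<Sum>i\<in>I. c i * v i m)"
  by (simp add: fsupp_def)

lemma mult_div_cancel_gen: "(q::real) \<noteq> 0 \<Longrightarrow> q * (e / q) = e" by simp

lemma stage_mix:
  fixes T :: "'n::finite \<Rightarrow> (nat \<Rightarrow> complex) \<Rightarrow> (nat \<Rightarrow> complex)"
  assumes T: "\<forall>j. bounded_op (T j)" and x: "orthonormal_seq x"
    and lim: "\<forall>j. (\<lambda>k. l2_inner (T j (x k)) (x k)) \<longlonglongrightarrow> lam $ j"
    and eps: "\<epsilon> > 0"
    and oH: "orthon {..<length H} (\<lambda>i. H!i)" and fH: "\<forall>i<length H. fsupp L (H!i)"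
    and fz: "fsupp L z0" and nz: "l2_norm z0 = 1" and z0s: "\<forall>m<s. z0 m = 0" and sL: "s \<le> L"
    and zH: "\<forall>i<length H. l2_inner z0 (H!i) = 0"
  shows "\<exists>W B' M. M \<ge> 2 \<and> length W = M \<and> orthon {..<length (H @ W)} (\<lambda>i. (H @ W)!i) \<and>
     (\<forall>a<M. fsupp B' (W!a) \<and> (\<forall>m<s. (W!a) m = 0) \<and> (\<forall>j. cmod (l2_inner (T j (W!a)) (W!a) - lam $ j) \<le> \<epsilon>)) \<and>
     z0 = (\<lambda>m. \<Sum>a<M. complex_of_real (1/sqrt M) * (W!a) m)"
proof -
  obtain C where C: "C \<ge> 0" "\<forall>j. \<forall>x\<in>l2. l2_norm (T j x) \<le> C * l2_norm x" using bops_bound[OF T] by blast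
  define Lam where "Lam = (\<Sum>j\<in>UNIV. cmod (lam $ j))"
  have Lj: "cmod (lam $ j) \<le> Lam" for j unfolding Lam_def by (rule member_le_sum) auto
  have L0: "Lam \<ge> 0" unfolding Lam_def by (simp add: sum_nonneg)
  define M where "M = nat \<lceil>2*(C + Lam)/\<epsilon>\<rceil> + 2"
  have M2: "M \<ge> 2" unfolding M_def by simp
  have Mge: "2*(C + Lam)/\<epsilon> \<le> M" unfolding M_def by linarith
  have Mpos: "real M > 0" using M2 by simp
  have CLM: "(C + Lam) / M \<le> \<epsilon>/2"
  proof -
    have "2*(C + Lam) \<le> M * \<epsilon>" using Mge eps by (simp add: field_simps)
    thus ?thesis using Mpos by (simp add: field_simps)
  qed
  define \<delta> where "\<delta> = (\<epsilon>/2) / (1 + (real M)^2)"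
  have d0: "\<delta> > 0" unfolding \<delta>_def using eps by (simp add: add_pos_nonneg)
  have dM: "\<delta> + (real M)^2 * \<delta> = \<epsilon>/2"
  proof -
    have "0 < 1 + (real M)^2" by (rule add_pos_nonneg) auto
    hence p: "1 + (real M)^2 \<noteq> 0" by simp
    have "\<delta> + (real M)^2 * \<delta> = (1 + (real M)^2) * \<delta>" by (simp add: algebra_simps)
    also have "\<dots> = \<epsilon>/2" unfolding \<delta>_def using p by (rule mult_div_cancel_gen)
    finally show ?thesis .
  qed
  have z0l: "z0 \<in> l2" by (rule l2_fsupp[OF fz])
  obtain Y BY where Y: "length Y = M - 1"
     "\<forall>b<M - 1. fsupp BY (Y!b) \<and> (\<forall>m<L. (Y!b) m = 0) \<and> l2_norm (Y!b) = 1 \<and>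
        (\<forall>j. cmod (l2_inner (T j (Y!b)) (Y!b) - lam $ j) \<le> \<delta>) \<and>
        (\<forall>j. \<forall>z\<in>{z0}. cmod (l2_inner (T j (Y!b)) z) \<le> \<delta> \<and> cmod (l2_inner (T j z) (Y!b)) \<le> \<delta>)"
     "\<forall>b<M - 1. \<forall>c<M - 1. b \<noteq> c \<longrightarrow> (\<forall>j. cmod (l2_inner (T j (Y!b)) (Y!c)) \<le> \<delta>) \<and> l2_inner (Y!b) (Y!c) = 0"
    using ylist[OF T x lim d0, of "{z0}" "M - 1" L] z0l by auto
  have Yf: "\<And>b. b < M - 1 \<Longrightarrow> fsupp BY (Y!b)" using Y(2) by blast
  have Yv: "\<And>b m. b < M - 1 \<Longrightarrow> m < L \<Longrightarrow> (Y!b) m = 0" using Y(2) by blast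
  have Yn: "\<And>b. b < M - 1 \<Longrightarrow> l2_norm (Y!b) = 1" using Y(2) by blast
  have Yd: "\<And>b j. b < M - 1 \<Longrightarrow> cmod (l2_inner (T j (Y!b)) (Y!b) - lam $ j) \<le> \<delta>" using Y(2) by blast
  have Yc1: "\<And>b j. b < M - 1 \<Longrightarrow> cmod (l2_inner (T j (Y!b)) z0) \<le> \<delta>" using Y(2) by blast
  have Yc2: "\<And>b j. b < M - 1 \<Longrightarrow> cmod (l2_inner (T j z0) (Y!b)) \<le> \<delta>" using Y(2) by blast
  have Ycr: "\<And>b c j. b < M - 1 \<Longrightarrow> c < M - 1 \<Longrightarrow> b \<noteq> c \<Longrightarrow> cmod (l2_inner (T j (Y!b)) (Y!c)) \<le> \<delta>" using Y(3) by blast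
  have Yo: "\<And>b c. b < M - 1 \<Longrightarrow> c < M - 1 \<Longrightarrow> b \<noteq> c \<Longrightarrow> l2_inner (Y!b) (Y!c) = 0" using Y(3) by blast
  have idx: "b - 1 < M - 1" if "b < M" "b \<noteq> 0" for b using that by arith
  have idx2: "b - 1 \<noteq> c - 1" if "b \<noteq> 0" "c \<noteq> 0" "b \<noteq> c" for b c :: nat using that by arith
  define z where "z b = (if b = 0 then z0 else Y!(b - 1))" for b
  define B' where "B' = max L BY"
  have zf: "fsupp B' (z b)" if "b < M" for b
  proof (cases "b = 0")
    case True thus ?thesis using fsupp_mono[OF fz, of "max L BY"] by (simp add: z_def B'_def)
  next
    case False thus ?thesis using fsupp_mono[OF Yf[OF idx[OF that False]], of "max L BY"] by (simp add: z_def B'_def)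
  qed
  have zl: "z b \<in> l2" if "b < M" for b using zf[OF that] by (rule l2_fsupp)
  have zs: "\<forall>m<s. z b m = 0" if "b < M" for b
    using that z0s Yv idx sL unfolding z_def by auto
  have z0Y: "l2_inner z0 (Y!c) = 0" "l2_inner (Y!c) z0 = 0" if "c < M - 1" for c
    using disj_orth[of L "Y!c" z0] Yv that fz by auto
  have znorm: "l2_inner (z b) (z b) = 1" if "b < M" for b
  proof -
    have "l2_norm (z b) = 1" using that nz Yn idx unfolding z_def by auto
    thus ?thesis using inner_self[OF zl[OF that]] by simp
  qed
  have zorth: "l2_inner (z b) (z c) = 0" if "b < M" "c < M" "b \<noteq> c" for b c
  proof (cases "b = 0")
    case True thus ?thesis using that z0Y idx by (auto simp: z_def)
  next
    case False note b0 = False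
    show ?thesis
    proof (cases "c = 0")
      case True thus ?thesis using that z0Y b0 idx by (auto simp: z_def)
    next
      case False thus ?thesis using that Yo b0 idx idx2 by (auto simp: z_def)
    qed
  qed
  have oz: "orthon {..<M} z" unfolding orthon_def using zl znorm zorth by auto
  have cross: "cmod (l2_inner (T j (z b)) (z c)) \<le> \<delta>" if "b < M" "c < M" "b \<noteq> c" for j b c
  proof (cases "b = 0")
    case True thus ?thesis using that Yc2 idx by (auto simp: z_def)
  next
    case False note b0 = False
    show ?thesis
    proof (cases "c = 0")
      case True thus ?thesis using that Yc1 b0 idx by (auto simp: z_def)
    next
      case False thus ?thesis using that Ycr b0 idx idx2 by (auto simp: z_def)
    qed
  qed
  have diag: "cmod (l2_inner (T j (z b)) (z b) - lam $ j) \<le> \<delta>" if "b < M" "b \<noteq> 0" for j b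
    using that Yd idx by (auto simp: z_def)
  define w where "w a = (\<lambda>m. \<Sum>b<M. complex_of_real (hh M a b) * z b m)" for a
  define W where "W = map w [0..<M]"
  have Wn: "W!a = w a" if "a < M" for a using that by (simp add: W_def)
  have lW: "length W = M" by (simp add: W_def)
  have oW: "orthon {..<length W} (\<lambda>i. W!i)"
    using mixing(1)[OF M2 oz] unfolding lW orthon_def by (simp add: Wn w_def)
  have Hl: "\<And>i. i < length H \<Longrightarrow> H!i \<in> l2" using oH by (auto simp: orthon_def)
  have HW: "l2_inner (H!i) (W!a) = 0" if "i < length H" "a < length W" for i a
  proof -
    have Hz: "l2_inner (H!i) (z b) = 0" if b: "b < M" for b
    proof (cases "b = 0")
      case True thus ?thesis using zH \<open>i < length H\<close> inner_cnj[OF z0l Hl[of i]] by (simp add: z_def)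
    next
      case False
      have "\<forall>m<L. z b m = 0" using False b Yv idx by (auto simp: z_def)
      thus ?thesis using disj_orth(2)[of L "z b" "H!i"] fH \<open>i < length H\<close> by auto
    qed
    have "l2_inner (H!i) (w a) = (\<Sum>b<M. cnj (complex_of_real (hh M a b)) * l2_inner (H!i) (z b))"
      unfolding w_def by (rule inner_sum_right) (use zl Hl[OF that(1)] in auto)
    also have "\<dots> = 0" using Hz by simp
    finally show ?thesis using Wn that lW by simp
  qed
  have oHW: "orthon {..<length (H @ W)} (\<lambda>i. (H @ W)!i)"
    by (rule orthon_append[OF oH oW]) (use HW in auto)
  have Wf: "fsupp B' (W!a)" if "a < M" for a
    unfolding Wn[OF that] w_def by (rule fsupp_sum) (use zf in auto)
  have Ws: "\<forall>m<s. (W!a) m = 0" if "a < M" for a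
    unfolding Wn[OF that] w_def using zs by simp
  have Wd: "cmod (l2_inner (T j (W!a)) (W!a) - lam $ j) \<le> \<epsilon>" if a: "a < M" for a j
  proof -
    have g1: "(\<Sum>b<M. (hh M a b)^2) = 1" using hh_orth[OF M2 a a] by (simp add: power2_eq_square)
    have gb: "\<forall>b<M. \<bar>hh M a b\<bar> \<le> 1" using hh_bound[OF M2 a] by auto
    have md: "cmod (l2_inner (T j (W!a)) (W!a) - lam $ j) \<le> (hh M a 0)^2 * cmod (l2_inner (T j (z 0)) (z 0) - lam $ j) + \<delta> + (real M)^2 * \<delta>"
      unfolding Wn[OF a] w_def
      by (rule mix_diag[OF T[rule_format] _ _ g1 gb]) (use M2 zl diag cross d0 in auto)
    have z0l': "z 0 \<in> l2" using zl[of 0] M2 by simp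
    have h0: "(hh M a 0)^2 = 1 / M" using hh_col0[OF M2] r_facts(3)[OF M2] by simp
    have "cmod (l2_inner (T j (z 0)) (z 0) - lam $ j) \<le> cmod (l2_inner (T j (z 0)) (z 0)) + cmod (lam $ j)"
      by (rule norm_triangle_ineq4)
    also have "cmod (l2_inner (T j (z 0)) (z 0)) \<le> C * l2_norm (z 0) * l2_norm (z 0)"
      by (rule op_inner_bound[OF spec[OF C(2), of j] C(1) T[rule_format] z0l' z0l'])
    also have "l2_norm (z 0) = 1" using nz by (simp add: z_def)
    finally have "cmod (l2_inner (T j (z 0)) (z 0) - lam $ j) \<le> C + Lam" using Lj[of j] by simp
    hence "(hh M a 0)^2 * cmod (l2_inner (T j (z 0)) (z 0) - lam $ j) \<le> (C + Lam) / M"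
      unfolding h0 using Mpos by (simp add: divide_right_mono)
    thus ?thesis using md dM CLM by linarith
  qed
  have rec: "z0 = (\<lambda>m. \<Sum>a<M. complex_of_real (1/sqrt M) * (W!a) m)"
  proof -
    have "(\<lambda>m. \<Sum>a<M. complex_of_real (1/sqrt M) * (W!a) m) = (\<lambda>m. \<Sum>a<M. complex_of_real (1/sqrt M) * (\<Sum>b<M. complex_of_real (hh M a b) * z b m))"
      by (simp add: Wn w_def)
    also have "\<dots> = z 0" by (rule mixing(2)[OF M2 oz])
    finally show ?thesis by (simp add: z_def)
  qed
  show ?thesis using M2 lW oHW Wf Ws Wd rec by blast
qed

lemma sum_split_add: fixes a b :: nat shows "(\<Sum>i<a+b. g i) = (\<Sum>i<a. g i) + (\<Sum>i<b. g (a+i))"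
  by (induct b) (simp_all add: add.assoc)

lemma stage:
  fixes T :: "'n::finite \<Rightarrow> (nat \<Rightarrow> complex) \<Rightarrow> (nat \<Rightarrow> complex)"
  assumes T: "\<forall>j. bounded_op (T j)" and x: "orthonormal_seq x"
    and lim: "\<forall>j. (\<lambda>k. l2_inner (T j (x k)) (x k)) \<longlonglongrightarrow> lam $ j"
    and inv: "invH s H B"
  shows "\<exists>W B'. W \<noteq> [] \<and> invH (Suc s) (H @ W) B' \<and>
     (\<forall>w\<in>set W. (\<forall>m<s. w m = 0) \<and> (\<forall>j. cmod (l2_inner (T j w) w - lam $ j) \<le> 1 / real (Suc s)))"
proof -
  have oH: "orthon {..<length H} (\<lambda>i. H!i)" and fH: "\<forall>i<length H. fsupp B (H!i)"
    and spH: "\<forall>k<s. in_span (ev k) H" using inv by (auto simp: invH_def)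
  have Hl: "\<And>i. i < length H \<Longrightarrow> H!i \<in> l2" using oH by (auto simp: orthon_def)
  have Hl': "\<forall>i\<in>{..<length H}. H!i \<in> l2" using Hl by auto
  define L where "L = max B (Suc s)"
  define eps where "eps = 1 / real (Suc s)"
  have eps0: "eps > 0" unfolding eps_def by simp
  define P where "P = (\<lambda>m. \<Sum>i<length H. cnj ((H!i) s) * (H!i) m)"
  define f where "f = (\<lambda>m. ev s m - P m)"
  have Pl: "P \<in> l2" unfolding P_def by (rule l2_sum) (use Hl in auto)
  have evl: "ev k \<in> l2" for k by (rule l2_fsupp[OF ev_fsupp])
  have fl: "f \<in> l2" unfolding f_def by (rule l2_diff[OF evl Pl])
  have fL: "fsupp L f" using fH unfolding fsupp_def f_def P_def L_def ev_def by auto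
  have fH0: "l2_inner f (H!i) = 0" if i: "i < length H" for i
  proof -
    have "l2_inner f (H!i) = l2_inner (ev s) (H!i) - l2_inner P (H!i)"
      unfolding f_def by (rule inner_diff_left[OF evl Pl Hl[OF i]])
    also have "l2_inner P (H!i) = (\<Sum>i'<length H. cnj ((H!i') s) * l2_inner (H!i') (H!i))"
      unfolding P_def by (rule inner_sum_left[OF finite_lessThan Hl' Hl[OF i]])
    also have "\<dots> = (\<Sum>i'<length H. if i' = i then cnj ((H!i) s) else 0)"
      using oH i by (intro sum.cong refl) (auto simp: orthon_def)
    also have "\<dots> = cnj ((H!i) s)" using i by (simp add: sum.delta')
    finally show ?thesis by (simp add: inner_ev_left)
  qed
  have fs: "f m = 0" if m: "m < s" for m
  proof -
    obtain c where c: "ev m = (\<lambda>k. \<Sum>i<length H. c i * (H!i) k)" using spH m by (auto simp: in_span_def)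
    have "f m = l2_inner f (ev m)" by (simp add: inner_ev_right)
    also have "\<dots> = l2_inner f (\<lambda>k. \<Sum>i<length H. c i * (H!i) k)" by (subst c) (rule refl)
    also have "\<dots> = (\<Sum>i<length H. cnj (c i) * l2_inner f (H!i))"
      by (rule inner_sum_right[OF finite_lessThan Hl' fl])
    also have "\<dots> = 0" using fH0 by simp
    finally show ?thesis .
  qed
  have evs: "ev s = (\<lambda>m. f m + P m)" unfolding f_def by simp
  show ?thesis
  proof (cases "\<forall>m. f m = 0")
    case True
    obtain y R where y: "fsupp R y" "\<forall>m<L. y m = 0" "l2_norm y = 1"
      "\<forall>j. cmod (l2_inner (T j y) y - lam $ j) \<le> eps"
      using good_vec[OF T x lim eps0, of "{}" L] by auto
    have yl: "y \<in> l2" by (rule l2_fsupp[OF y(1)])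
    have oW: "orthon {..<length [y]} (\<lambda>i. [y]!i)"
      using yl inner_self[OF yl] y(3) by (simp add: orthon_def)
    have cr: "l2_inner (H!i) ([y]!a) = 0" if "i < length H" "a < length [y]" for i a
    proof -
      have "fsupp L (H!i)" using fH that by (auto simp: L_def intro: fsupp_mono)
      thus ?thesis using disj_orth(2)[of L y "H!i"] y(2) that by simp
    qed
    have o: "orthon {..<length (H @ [y])} (\<lambda>i. (H @ [y])!i)" by (rule orthon_append[OF oH oW]) (use cr in auto)
    have fs': "\<forall>i<length (H @ [y]). fsupp (max B R) ((H @ [y])!i)"
      using fH y(1) by (auto simp: nth_append intro: fsupp_mono)
    have "ev s = P" using evs True by simp
    hence "in_span (ev s) H" unfolding P_def in_span_def by (rule exI[of _ "\<lambda>i. cnj ((H!i) s)"])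
    hence sp: "\<forall>k<Suc s. in_span (ev k) (H @ [y])" using spH span_append by (metis less_Suc_eq)
    have "invH (Suc s) (H @ [y]) (max B R)" unfolding invH_def using o fs' sp by blast
    moreover have "\<forall>w\<in>set [y]. (\<forall>m<s. w m = 0) \<and> (\<forall>j. cmod (l2_inner (T j w) w - lam $ j) \<le> 1 / real (Suc s))"
      using y(2,4) by (simp add: L_def eps_def)
    ultimately show ?thesis by blast
  next
    case False
    define nf where "nf = l2_norm f"
    have nf0: "nf > 0"
    proof -
      have "nf \<noteq> 0" using False l2_norm_zero[OF fl] by (auto simp: nf_def)
      thus ?thesis using l2_norm_nonneg[OF fl] by (simp add: nf_def)
    qed
    define z0 where "z0 = (\<lambda>m. complex_of_real (1/nf) * f m)"
    have z0l: "z0 \<in> l2" unfolding z0_def by (rule l2_scale[OF fl])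
    have nz: "l2_norm z0 = 1" unfolding z0_def norm_scale[OF fl] norm_of_real using nf0 by (simp add: nf_def)
    have fz: "fsupp L z0" using fL by (simp add: fsupp_def z0_def)
    have z0s: "\<forall>m<s. z0 m = 0" using fs by (simp add: z0_def)
    have zH: "\<forall>i<length H. l2_inner z0 (H!i) = 0"
    proof (intro allI impI)
      fix i assume i: "i < length H"
      show "l2_inner z0 (H!i) = 0" unfolding z0_def
        by (simp only: inner_scale_left[OF fl Hl[OF i]] fH0[OF i] mult_zero_right)
    qed
    have sL: "s \<le> L" by (simp add: L_def)
    have fHL: "\<forall>i<length H. fsupp L (H!i)" using fH by (auto simp: L_def intro: fsupp_mono)
    obtain W B'' M where W: "M \<ge> 2" "length W = M" "orthon {..<length (H @ W)} (\<lambda>i. (H @ W)!i)"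
      "\<forall>a<M. fsupp B'' (W!a) \<and> (\<forall>m<s. (W!a) m = 0) \<and> (\<forall>j. cmod (l2_inner (T j (W!a)) (W!a) - lam $ j) \<le> eps)"
      "z0 = (\<lambda>m. \<Sum>a<M. complex_of_real (1/sqrt M) * (W!a) m)"
      using stage_mix[OF T x lim eps0 oH fHL fz nz z0s sL zH] by blast
    have fs': "\<forall>i<length (H @ W). fsupp (max B B'') ((H @ W)!i)"
    proof (intro allI impI)
      fix i assume i: "i < length (H @ W)"
      show "fsupp (max B B'') ((H @ W)!i)"
      proof (cases "i < length H")
        case True thus ?thesis using fH by (auto simp: nth_append intro: fsupp_mono)
      next
        case False
        hence ii: "i - length H < M" using W(2) i by simp
        hence "fsupp B'' (W!(i - length H))" using W(4) by blast
        thus ?thesis using False by (simp add: nth_append fsupp_mono)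
      qed
    qed
    have "in_span (ev s) (H @ W)"
    proof -
      define c where "c i = (if i < length H then cnj ((H!i) s) else complex_of_real (nf / sqrt M))" for i
      have "(\<lambda>m. \<Sum>i<length (H @ W). c i * ((H @ W)!i) m) = ev s"
      proof
        fix m
        have "(\<Sum>i<length (H @ W). c i * ((H @ W)!i) m) =
            (\<Sum>i<length H. c i * ((H @ W)!i) m) + (\<Sum>i<M. c (length H + i) * ((H @ W)!(length H + i)) m)"
          using W(2) by (simp add: sum_split_add)
        also have "(\<Sum>i<length H. c i * ((H @ W)!i) m) = P m"
          unfolding P_def by (intro sum.cong refl) (auto simp: c_def nth_append)
        also have "(\<Sum>i<M. c (length H + i) * ((H @ W)!(length H + i)) m) = (\<Sum>i<M. complex_of_real (nf / sqrt M) * (W!i) m)"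
          by (intro sum.cong refl) (simp add: c_def nth_append)
        also have "\<dots> = complex_of_real nf * z0 m"
          using W(5) by (simp add: sum_distrib_left mult.assoc)
        also have "complex_of_real nf * z0 m = f m" unfolding z0_def using nf0 by simp
        finally show "(\<Sum>i<length (H @ W). c i * ((H @ W)!i) m) = ev s m" using evs by simp
      qed
      thus ?thesis unfolding in_span_def by metis
    qed
    hence sp: "\<forall>k<Suc s. in_span (ev k) (H @ W)" using spH span_append by (metis less_Suc_eq)
    have "invH (Suc s) (H @ W) (max B B'')" unfolding invH_def using W(3) fs' sp by blast
    moreover have "W \<noteq> []" using W(1,2) by auto
    moreover have "\<forall>w\<in>set W. (\<forall>m<s. w m = 0) \<and> (\<forall>j. cmod (l2_inner (T j w) w - lam $ j) \<le> 1 / real (Suc s))"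
      using W(2,4) by (auto simp: in_set_conv_nth eps_def)
    ultimately show ?thesis by blast
  qed
qed

lemma diag_subseq:
  fixes f :: "nat \<Rightarrow> nat \<Rightarrow> complex"
  assumes "\<forall>i k. cmod (f i k) \<le> B"
  shows "\<exists>r \<alpha>. strict_mono r \<and> (\<forall>k. (\<lambda>i. f (r i) k) \<longlonglongrightarrow> \<alpha> k)"
proof -
  define S where "S = (PiE UNIV (\<lambda>_::nat. cball (0::complex) B))"
  have "compactin (product_topology (\<lambda>i. euclidean) UNIV) S"
    unfolding S_def compactin_PiE by simp
  hence cS: "compact S" unfolding euclidean_product_topology by simp
  have fS: "\<forall>n. f n \<in> S" using assms by (auto simp: S_def)
  obtain l r where r: "strict_mono r" "(f \<circ> r) \<longlonglongrightarrow> l"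
    using compact_imp_seq_compact[OF cS] fS unfolding seq_compact_def by blast
  have "(\<lambda>i. f (r i) k) \<longlonglongrightarrow> l k" for k
  proof -
    have c: "isCont (\<lambda>x::nat \<Rightarrow> complex. x k) l"
      using continuous_on_eq_continuous_at[OF open_UNIV, of "\<lambda>x::nat \<Rightarrow> complex. x k"] continuous_on_product_coordinates[of k] by blast
    show ?thesis using isCont_tendsto_compose[OF c r(2)] by (simp add: o_def)
  qed
  thus ?thesis using r(1) by blast
qed

definition Gop :: "(nat \<Rightarrow> nat \<Rightarrow> complex) \<Rightarrow> (nat \<Rightarrow> nat) \<Rightarrow> (nat \<Rightarrow> complex) \<Rightarrow> (nat \<Rightarrow> complex) \<Rightarrow> (nat \<Rightarrow> complex)" where
  "Gop u N c a = (\<lambda>m. \<Sum>k<N m. c k * a k * u k m)"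

lemma Gop_local:
  assumes NU: "\<forall>m k. N m \<le> k \<longrightarrow> u k m = 0" and n: "N m \<le> n"
  shows "Gop u N c a m = (\<Sum>k<n. c k * a k * u k m)"
  unfolding Gop_def using n NU by (intro sum.mono_neutral_left) auto

lemma G_bound:
  assumes U: "orthonormal_seq u" and NU: "\<forall>m k. N m \<le> k \<longrightarrow> u k m = 0"
    and cD: "\<forall>k. cmod (c k) \<le> D" and A: "\<forall>n. (\<Sum>k<n. (cmod (a k))^2) \<le> A^2" and D0: "0 \<le> D" and A0: "0 \<le> A"
  shows "Gop u N c a \<in> l2 \<and> l2_norm (Gop u N c a) \<le> D * A"
proof -
  have ul: "\<And>k. u k \<in> l2" using U by (simp add: orthonormal_seq_def)
  have part: "(\<Sum>m<L. (cmod (Gop u N c a m))^2) \<le> (D*A)^2" for L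
  proof -
    define n where "n = (\<Sum>m<L. N m)"
    have Nn: "N m \<le> n" if "m < L" for m unfolding n_def using that by (intro member_le_sum) auto
    define S where "S = (\<lambda>m. \<Sum>k<n. (c k * a k) * u k m)"
    have eq: "Gop u N c a m = S m" if "m < L" for m
      unfolding S_def using Gop_local[OF NU Nn[OF that]] by simp
    have Sl: "S \<in> l2" unfolding S_def by (rule l2_sum) (use ul in auto)
    have "(\<Sum>m<L. (cmod (Gop u N c a m))^2) = (\<Sum>m<L. (cmod (S m))^2)" by (simp add: eq)
    also have "\<dots> \<le> (\<Sum>m. (cmod (S m))^2)" using Sl by (intro sum_le_suminf) (auto simp: l2_iff)
    also have "\<dots> = (l2_norm S)^2" by (rule l2_norm_sq[OF Sl, symmetric])
    also have "\<dots> = (\<Sum>k<n. (cmod (c k * a k))^2)" unfolding S_def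
      by (rule norm_orth_sum[OF finite_lessThan orthon_seq[OF U]])
    also have "\<dots> \<le> (\<Sum>k<n. D^2 * (cmod (a k))^2)"
    proof (rule sum_mono)
      fix k
      have "(cmod (c k))^2 \<le> D^2" using cD D0 by (intro power_mono) auto
      thus "(cmod (c k * a k))^2 \<le> D^2 * (cmod (a k))^2" by (simp add: norm_mult power_mult_distrib mult_right_mono)
    qed
    also have "\<dots> = D^2 * (\<Sum>k<n. (cmod (a k))^2)" by (simp add: sum_distrib_left)
    also have "\<dots> \<le> D^2 * A^2" using A by (intro mult_left_mono) auto
    finally show ?thesis by (simp add: power_mult_distrib)
  qed
  have summ: "summable (\<lambda>m. (cmod (Gop u N c a m))^2)"
    by (rule summableI_nonneg_bounded[of _ "(D*A)^2"]) (simp, rule part)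
  have "(\<Sum>m. (cmod (Gop u N c a m))^2) \<le> (D*A)^2" by (rule suminf_le_const[OF summ part])
  moreover have gl: "Gop u N c a \<in> l2" using summ by (simp add: l2_iff)
  ultimately have "(l2_norm (Gop u N c a))^2 \<le> (D*A)^2" using l2_norm_sq[OF gl] by simp
  hence "l2_norm (Gop u N c a) \<le> D * A" by (rule power2_le_imp_le) (use D0 A0 in simp)
  thus ?thesis using gl by simp
qed

lemma Gop_lin_coef: "Gop u N c (\<lambda>k. p * a k + q * b k) = (\<lambda>m. p * Gop u N c a m + q * Gop u N c b m)"
  unfolding Gop_def by (simp add: sum_distrib_left sum.distrib algebra_simps)

lemma Gop_diff_coef: "(\<lambda>m. Gop u N c a m - Gop u N c b m) = Gop u N c (\<lambda>k. a k - b k)"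
  unfolding Gop_def by (simp add: sum_subtractf[symmetric] algebra_simps)

lemma Gop_split_c: "Gop u N c a = (\<lambda>m. Gop u N (\<lambda>k. if k < n0 then c k else 0) a m + Gop u N (\<lambda>k. if k < n0 then 0 else c k) a m)"
  unfolding Gop_def
proof (rule ext)
  fix m
  show "(\<Sum>k<N m. c k * a k * u k m) = (\<Sum>k<N m. (if k < n0 then c k else 0) * a k * u k m) + (\<Sum>k<N m. (if k < n0 then 0 else c k) * a k * u k m)"
    by (subst sum.distrib[symmetric]) (rule sum.cong, auto)
qed

lemma Gop_c1: "Gop u N (\<lambda>k. if k < n0 then c k else 0) a = Gop u N c (\<lambda>k. if k < n0 then a k else 0)"
  unfolding Gop_def by (intro ext sum.cong refl) auto

lemma Gop_compact:
  assumes U: "orthonormal_seq u" and NU: "\<forall>m k. N m \<le> k \<longrightarrow> u k m = 0"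
    and c0: "c \<longlonglongrightarrow> 0"
  shows "compact_op (\<lambda>x. Gop u N c (\<lambda>k. l2_inner x (u k)))"
proof -
  define K where "K = (\<lambda>x. Gop u N c (\<lambda>k. l2_inner x (u k)))"
  have ul: "\<And>k. u k \<in> l2" using U by (simp add: orthonormal_seq_def)
  obtain D where D: "D > 0" "\<forall>k. cmod (c k) \<le> D"
    using convergent_imp_Bseq[of c] c0 by (auto simp: convergent_def elim!: BseqE)
  have bes: "\<forall>n. (\<Sum>k<n. (cmod (l2_inner x (u k)))^2) \<le> (l2_norm x)^2" if "x \<in> l2" for x
    using bessel[OF that _ orthon_seq[OF U]] by simp
  have Kb: "K x \<in> l2 \<and> l2_norm (K x) \<le> D * l2_norm x" if x: "x \<in> l2" for x
    unfolding K_def using D by (intro G_bound[OF U NU] bes[OF x] l2_norm_nonneg[OF x]) auto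
  have bop: "bounded_op K" unfolding bounded_op_def
  proof (intro conjI ballI allI)
    fix x assume "x \<in> l2" thus "K x \<in> l2" using Kb by blast
  next
    fix x y a b assume x: "x \<in> l2" and y: "y \<in> l2"
    have "(\<lambda>k. l2_inner (\<lambda>m. a * x m + b * y m) (u k)) = (\<lambda>k. a * l2_inner x (u k) + b * l2_inner y (u k))"
      using inner_lin_left[OF x y ul] by simp
    thus "K (\<lambda>k. a * x k + b * y k) = (\<lambda>k. a * K x k + b * K y k)"
      unfolding K_def by (simp add: Gop_lin_coef)
  next
    show "\<exists>C. \<forall>x\<in>l2. l2_norm (K x) \<le> C * l2_norm x" using Kb by blast
  qed
  have comp: "\<exists>r z. strict_mono r \<and> z \<in> l2 \<and> (\<lambda>i. l2_norm (\<lambda>k. K (xs (r i)) k - z k)) \<longlonglongrightarrow> 0"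
    if xs: "\<forall>i. xs i \<in> l2" and bx: "\<exists>B. \<forall>i. l2_norm (xs i) \<le> B" for xs :: "nat \<Rightarrow> nat \<Rightarrow> complex"
  proof -
    obtain B0 where B0: "\<forall>i. l2_norm (xs i) \<le> B0" using bx by blast
    define B where "B = max B0 0"
    have B: "B \<ge> 0" "\<forall>i. l2_norm (xs i) \<le> B" using B0 unfolding B_def by (auto intro: max.coboundedI1)
    define a where "a i k = l2_inner (xs i) (u k)" for i k
    have ab: "cmod (a i k) \<le> B" for i k
    proof -
      have "cmod (a i k) \<le> l2_norm (xs i) * l2_norm (u k)" unfolding a_def by (rule cauchy_schwarz[OF xs[rule_format] ul])
      thus ?thesis using B(2)[rule_format, of i] norm_of_orthonormal[OF U] by simp
    qed
    have aps: "(\<Sum>k<n. (cmod (a i k))^2) \<le> B^2" for i n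
    proof -
      have "(\<Sum>k<n. (cmod (a i k))^2) \<le> (l2_norm (xs i))^2" using bes[OF xs[rule_format]] by (simp add: a_def)
      also have "\<dots> \<le> B^2" using B l2_norm_nonneg[OF xs[rule_format]] by (intro power_mono) auto
      finally show ?thesis .
    qed
    obtain r \<alpha> where r: "strict_mono r" "\<forall>k. (\<lambda>i. a (r i) k) \<longlonglongrightarrow> \<alpha> k"
      using diag_subseq[where f=a and B=B] ab by blast
    have alps: "(\<Sum>k<n. (cmod (\<alpha> k))^2) \<le> B^2" for n
    proof -
      have "(\<lambda>i. \<Sum>k<n. (cmod (a (r i) k))^2) \<longlonglongrightarrow> (\<Sum>k<n. (cmod (\<alpha> k))^2)"
        using r(2) by (intro tendsto_sum tendsto_power tendsto_norm) auto
      thus ?thesis using aps by (intro LIMSEQ_le_const2) auto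
    qed
    define z where "z = Gop u N c \<alpha>"
    have zl: "z \<in> l2" unfolding z_def using G_bound[OF U NU D(2) allI[OF alps]] D B by auto
    define b where "b i k = a (r i) k - \<alpha> k" for i k
    have bps: "(\<Sum>k<n. (cmod (b i k))^2) \<le> (2*B)^2" for i n
    proof -
      have "(\<Sum>k<n. (cmod (b i k))^2) \<le> (\<Sum>k<n. 2*(cmod (a (r i) k))^2 + 2*(cmod (\<alpha> k))^2)"
        unfolding b_def using sq_add_le[of "a (r i) _" "- \<alpha> _"] by (intro sum_mono) simp
      also have "\<dots> = 2 * (\<Sum>k<n. (cmod (a (r i) k))^2) + 2 * (\<Sum>k<n. (cmod (\<alpha> k))^2)"
        by (simp add: sum.distrib sum_distrib_left)
      also have "\<dots> \<le> 2 * B^2 + 2 * B^2" using aps alps by (intro add_mono) auto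
      finally show ?thesis by (simp add: power2_eq_square)
    qed
    have diffeq: "(\<lambda>m. K (xs (r i)) m - z m) = Gop u N c (b i)" for i
      unfolding K_def z_def b_def a_def by (rule Gop_diff_coef)
    have "(\<lambda>i. l2_norm (Gop u N c (b i))) \<longlonglongrightarrow> 0"
    proof (rule LIMSEQ_I)
      fix e :: real assume e: "e > 0"
      define \<eta> where "\<eta> = e / (4 * (B + 1))"
      have eta: "\<eta> > 0" unfolding \<eta>_def using e B by simp
      obtain n0 where n0: "\<forall>k\<ge>n0. cmod (c k) < \<eta>" using c0 eta unfolding LIMSEQ_iff by auto
      define Q where "Q i = (\<Sum>k<n0. (cmod (b i k))^2)" for i
      have "(\<lambda>i. Q i) \<longlonglongrightarrow> (\<Sum>k<n0. (cmod (0::complex))^2)"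
        unfolding Q_def b_def using r(2)
        by (intro tendsto_sum tendsto_power tendsto_norm) (auto intro: LIM_zero)
      hence Q0: "(\<lambda>i. Q i) \<longlonglongrightarrow> 0" by simp
      define t where "t = e / (2 * (D + 1))"
      have t0: "t > 0" unfolding t_def using e D by simp
      obtain no where no: "\<forall>i\<ge>no. norm (Q i - 0) < t^2" using Q0 t0 unfolding LIMSEQ_iff
        by (metis zero_less_power)
      show "\<exists>no. \<forall>i\<ge>no. norm (l2_norm (Gop u N c (b i)) - 0) < e"
      proof (intro exI allI impI)
        fix i assume i: "i \<ge> no"
        have Qnn: "Q i \<ge> 0" unfolding Q_def by (simp add: sum_nonneg)
        have Qt: "Q i < t^2" using no i Qnn by auto
        have sQ: "sqrt (Q i) < t" using Qt t0 Qnn by (metis real_sqrt_less_mono real_sqrt_abs abs_of_pos)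
        define c1 where "c1 = (\<lambda>k. if k < n0 then c k else 0)"
        define c2 where "c2 = (\<lambda>k. if k < n0 then 0 else c k)"
        define b' where "b' = (\<lambda>k. if k < n0 then b i k else 0)"
        have sp: "Gop u N c (b i) = (\<lambda>m. Gop u N c1 (b i) m + Gop u N c2 (b i) m)"
          unfolding c1_def c2_def by (rule Gop_split_c)
        have g1: "Gop u N c1 (b i) = Gop u N c b'" unfolding c1_def b'_def by (rule Gop_c1)
        have b'ps: "\<forall>n. (\<Sum>k<n. (cmod (b' k))^2) \<le> (sqrt (Q i))^2"
        proof
          fix n
          have "(\<Sum>k<n. (cmod (b' k))^2) = (\<Sum>k\<in>{..<n} \<inter> {..<n0}. (cmod (b i k))^2)"
            unfolding b'_def by (rule sum.mono_neutral_cong_right) auto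
          also have "\<dots> \<le> Q i" unfolding Q_def by (rule sum_mono2) auto
          finally show "(\<Sum>k<n. (cmod (b' k))^2) \<le> (sqrt (Q i))^2" using Qnn by simp
        qed
        have G1: "Gop u N c b' \<in> l2 \<and> l2_norm (Gop u N c b') \<le> D * sqrt (Q i)"
          by (rule G_bound[OF U NU D(2) b'ps]) (use D Qnn in auto)
        have c2b: "\<forall>k. cmod (c2 k) \<le> \<eta>" using n0 eta by (auto simp: c2_def less_imp_le not_less)
        have G2: "Gop u N c2 (b i) \<in> l2 \<and> l2_norm (Gop u N c2 (b i)) \<le> \<eta> * (2*B)"
          by (rule G_bound[OF U NU c2b]) (use bps eta B in auto)
        have "l2_norm (Gop u N c (b i)) \<le> l2_norm (Gop u N c1 (b i)) + l2_norm (Gop u N c2 (b i))"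
          unfolding sp by (rule norm_triangle_l2) (use G1 G2 g1 in auto)
        also have "\<dots> \<le> D * sqrt (Q i) + \<eta> * (2*B)" using G1 G2 g1 by simp
        also have "D * sqrt (Q i) \<le> D * t" using sQ D by simp
        also have "D * t < e/2" unfolding t_def using D e by (simp add: field_simps)
        also have "\<eta> * (2*B) < e/2" unfolding \<eta>_def using B e by (simp add: field_simps)
        finally have lt: "l2_norm (Gop u N c (b i)) < e" by simp
        have "Gop u N c (b i) \<in> l2" using G_bound[OF U NU D(2) allI[OF bps[of i]]] D B by auto
        hence "l2_norm (Gop u N c (b i)) \<ge> 0" by (rule l2_norm_nonneg)
        thus "norm (l2_norm (Gop u N c (b i)) - 0) < e" using lt by simp
      qed
    qed
    hence "(\<lambda>i. l2_norm (\<lambda>k. K (xs (r i)) k - z k)) \<longlonglongrightarrow> 0" by (simp only: diffeq)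
    thus ?thesis using r(1) zl by blast
  qed
  show ?thesis unfolding compact_op_def K_def[symmetric] using bop comp by blast
qed

primrec iter_st :: "(nat \<Rightarrow> 'a \<Rightarrow> 'a) \<Rightarrow> 'a \<Rightarrow> nat \<Rightarrow> 'a" where
  "iter_st f a 0 = a"
| "iter_st f a (Suc n) = f n (iter_st f a n)"

definition stP where
  "stP T lam s H B W B' \<longleftrightarrow> W \<noteq> [] \<and> invH (Suc s) (H @ W) B' \<and>
     (\<forall>w\<in>set W. (\<forall>m<s. w m = 0) \<and> (\<forall>j. cmod (l2_inner (T j w) w - lam $ j) \<le> 1 / real (Suc s)))"

lemma supset_dir:
  fixes T :: "'n::finite \<Rightarrow> (nat \<Rightarrow> complex) \<Rightarrow> (nat \<Rightarrow> complex)"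
  assumes T: "\<forall>j. bounded_op (T j)" and lam: "lam \<in> ess_num_range T"
  shows "\<exists>K. (\<forall>j. compact_op (K j)) \<and> lam \<in> D_const (\<lambda>j x. (\<lambda>k. T j x k + K j x k))"
proof -
  obtain x where x: "orthonormal_seq x" and lim: "\<forall>j. (\<lambda>k. l2_inner (T j (x k)) (x k)) \<longlonglongrightarrow> lam $ j"
    using lam by (auto simp: ess_num_range_def)
  define Q where "Q s p = (SOME q::(nat \<Rightarrow> complex) list \<times> nat. stP T lam s (fst p) (snd p) (fst q) (snd q))"
    for s and p :: "(nat \<Rightarrow> complex) list \<times> nat"
  define step where "step s p = (fst p @ fst (Q s p), snd (Q s p))" for s and p :: "(nat \<Rightarrow> complex) list \<times> nat"
  define st where "st = iter_st step ([], 0::nat)"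
  define H where "H s = fst (st s)" for s
  define Bs where "Bs s = snd (st s)" for s
  define W where "W s = fst (Q s (st s))" for s
  have Q: "stP T lam s (H s) (Bs s) (fst (Q s (st s))) (snd (Q s (st s)))" if iv: "invH s (H s) (Bs s)" for s
  proof -
    obtain W' B' where "stP T lam s (H s) (Bs s) W' B'"
      using stage[OF T x lim iv] unfolding stP_def by blast
    hence "\<exists>q. stP T lam s (fst (st s)) (snd (st s)) (fst q) (snd q)" unfolding H_def Bs_def by force
    thus ?thesis unfolding Q_def H_def Bs_def by (rule someI_ex)
  qed
  have HS: "H (Suc s) = H s @ W s" for s by (simp add: H_def W_def st_def step_def)
  have BS: "Bs (Suc s) = snd (Q s (st s))" for s by (simp add: Bs_def st_def step_def)
  have H0: "H 0 = []" "Bs 0 = 0" by (simp_all add: H_def Bs_def st_def)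
  have inv: "invH s (H s) (Bs s)" for s
  proof (induction s)
    case 0 show ?case by (simp add: invH_def H0 orthon_def)
  next
    case (Suc s)
    from Q[OF Suc] show ?case by (simp add: stP_def HS BS W_def)
  qed
  have Ws: "stP T lam s (H s) (Bs s) (W s) (Bs (Suc s))" for s
    using Q[OF inv[of s]] by (simp add: W_def BS)
  have Wne: "W s \<noteq> []" for s using Ws[of s] by (simp add: stP_def)
  have lenS: "length (H (Suc s)) > length (H s)" for s using Wne[of s] by (simp add: HS)
  have lenge: "length (H s) \<ge> s" for s
  proof (induction s)
    case 0 show ?case by simp
  next
    case (Suc s) thus ?case using lenS[of s] by simp
  qed
  have prefix: "\<exists>ys. H s' = H s @ ys" if "s \<le> s'" for s s'
    using that
  proof (induction s')
    case 0 thus ?case by simp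
  next
    case (Suc s')
    show ?case
    proof (cases "s = Suc s'")
      case True thus ?thesis by simp
    next
      case False
      hence "s \<le> s'" using Suc by simp
      then obtain ys where "H s' = H s @ ys" using Suc by blast
      thus ?thesis by (simp add: HS)
    qed
  qed
  have Hnth: "H s' ! i = H s ! i" if "s \<le> s'" "i < length (H s)" for s s' i
    using prefix[OF that(1)] that(2) by (auto simp: nth_append)
  have lenmono: "length (H s) \<le> length (H s')" if "s \<le> s'" for s s'
    using prefix[OF that] by auto
  have per: "\<forall>i<length (H s). \<forall>S. length (H S) \<le> i \<longrightarrow> (\<forall>m<S. (H s ! i) m = 0) \<and>
     (\<forall>j. cmod (l2_inner (T j (H s ! i)) (H s ! i) - lam $ j) \<le> 1 / real (Suc S))" for s
  proof (induction s)
    case 0 show ?case by (simp add: H0)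
  next
    case (Suc s)
    show ?case
    proof (intro allI impI)
      fix i S assume i: "i < length (H (Suc s))" and iS: "length (H S) \<le> i"
      show "(\<forall>m<S. (H (Suc s) ! i) m = 0) \<and>
        (\<forall>j. cmod (l2_inner (T j (H (Suc s) ! i)) (H (Suc s) ! i) - lam $ j) \<le> 1 / real (Suc S))"
      proof (cases "i < length (H s)")
        case True
        thus ?thesis using Suc.IH iS Hnth[of s "Suc s" i] by simp
      next
        case False
        define w where "w = W s ! (i - length (H s))"
        have wH: "H (Suc s) ! i = w" using False by (simp add: HS w_def nth_append)
        have "w \<in> set (W s)" using False i by (simp add: w_def HS)
        hence wp: "(\<forall>m<s. w m = 0) \<and> (\<forall>j. cmod (l2_inner (T j w) w - lam $ j) \<le> 1 / real (Suc s))"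
          using Ws[of s] by (simp add: stP_def)
        have Ss: "S \<le> s"
        proof (rule ccontr)
          assume "\<not> S \<le> s"
          hence "length (H (Suc s)) \<le> length (H S)" by (intro lenmono) simp
          thus False using i iS by simp
        qed
        have "1 / real (Suc s) \<le> 1 / real (Suc S)" using Ss by (simp add: frac_le)
        thus ?thesis using wp Ss wH by force
      qed
    qed
  qed
  define u where "u k = H (Suc k) ! k" for k
  have klen: "k < length (H (Suc k))" for k using lenge[of "Suc k"] by simp
  have uH: "u k = H s ! k" if "k < length (H s)" for k s
  proof (cases "Suc k \<le> s")
    case True thus ?thesis unfolding u_def using Hnth[OF True klen] by simp
  next
    case False thus ?thesis unfolding u_def using Hnth[of s "Suc k" k] that by simp
  qed
  have orthH: "orthon {..<length (H s)} (\<lambda>i. H s ! i)" for s using inv[of s] by (simp add: invH_def)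
  have U: "orthonormal_seq u" unfolding orthonormal_seq_def
  proof (intro conjI allI)
    fix k show "u k \<in> l2" using orthH[of "Suc k"] klen[of k] by (simp add: orthon_def u_def)
  next
    fix k k'
    define s where "s = Suc (max k k')"
    have kk: "k < length (H s)" "k' < length (H s)" using lenge[of s] by (auto simp: s_def)
    show "l2_inner (u k) (u k') = (if k = k' then 1 else 0)"
      using orthH[of s] kk uH[OF kk(1)] uH[OF kk(2)] by (simp add: orthon_def)
  qed
  have ul: "\<And>k. u k \<in> l2" using U by (simp add: orthonormal_seq_def)
  have ONB: "orthonormal_basis u" unfolding orthonormal_basis_def
  proof (intro conjI U ballI impI)
    fix y assume y: "y \<in> l2" and yo: "\<forall>k. l2_inner y (u k) = 0"
    show "y = (\<lambda>_. 0)"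
    proof
      fix m
      obtain c where c: "ev m = (\<lambda>k. \<Sum>i<length (H (Suc m)). c i * (H (Suc m) ! i) k)"
        using inv[of "Suc m"] by (auto simp: invH_def in_span_def)
      have e: "ev m = (\<lambda>k. \<Sum>i<length (H (Suc m)). c i * u i k)"
        unfolding c by (intro ext sum.cong refl) (simp add: uH)
      have "y m = l2_inner y (ev m)" by (simp add: inner_ev_right)
      also have "\<dots> = (\<Sum>i<length (H (Suc m)). cnj (c i) * l2_inner y (u i))"
        unfolding e by (rule inner_sum_right) (use ul y in auto)
      also have "\<dots> = 0" using yo by simp
      finally show "y m = 0" .
    qed
  qed
  define N where "N m = length (H (Suc m))" for m
  have NU: "\<forall>m k. N m \<le> k \<longrightarrow> u k m = 0"
  proof (intro allI impI)
    fix m k assume "N m \<le> k"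
    thus "u k m = 0" using per[of "Suc k"] klen[of k] unfolding N_def u_def by auto
  qed
  define c where "c j k = lam $ j - l2_inner (T j (u k)) (u k)" for j k
  have c0: "c j \<longlonglongrightarrow> 0" for j
  proof (rule LIMSEQ_I)
    fix e :: real assume e: "e > 0"
    obtain S where S: "1 / real (Suc S) < e" using e by (metis nat_approx_posE of_nat_Suc)
    show "\<exists>no. \<forall>k\<ge>no. norm (c j k - 0) < e"
    proof (intro exI allI impI)
      fix k assume k: "k \<ge> length (H S)"
      have "cmod (l2_inner (T j (u k)) (u k) - lam $ j) \<le> 1 / real (Suc S)"
        using per[of "Suc k"] klen[of k] k unfolding u_def by auto
      hence "cmod (c j k) \<le> 1 / real (Suc S)" unfolding c_def by (simp add: norm_minus_commute)
      thus "norm (c j k - 0) < e" using S by simp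
    qed
  qed
  define K where "K j = (\<lambda>x. Gop u N (c j) (\<lambda>k. l2_inner x (u k)))" for j
  have Kc: "\<forall>j. compact_op (K j)" unfolding K_def using Gop_compact[OF U NU c0] by blast
  have Ku: "K j (u k) = (\<lambda>m. c j k * u k m)" for j k
  proof
    fix m
    have "K j (u k) m = (\<Sum>k'<N m. c j k' * l2_inner (u k) (u k') * u k' m)" by (simp add: K_def Gop_def)
    also have "\<dots> = (\<Sum>k'<N m. if k' = k then c j k * u k m else 0)"
      using U by (intro sum.cong refl) (auto simp: orthonormal_seq_def)
    also have "\<dots> = c j k * u k m" using NU by (auto simp: sum.delta' not_less)
    finally show "K j (u k) m = c j k * u k m" .
  qed
  have "l2_inner (\<lambda>m. T j (u k) m + K j (u k) m) (u k) = lam $ j" for j k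
  proof -
    have Tl: "T j (u k) \<in> l2" using T ul bop_l2 by blast
    have "l2_inner (\<lambda>m. 1 * T j (u k) m + c j k * u k m) (u k) = 1 * l2_inner (T j (u k)) (u k) + c j k * l2_inner (u k) (u k)"
      by (rule inner_lin_left[OF Tl ul ul])
    moreover have "l2_inner (u k) (u k) = 1" using U by (simp add: orthonormal_seq_def)
    ultimately show ?thesis unfolding Ku by (simp add: c_def)
  qed
  hence "lam \<in> D_const (\<lambda>j x. (\<lambda>k. T j x k + K j x k))" using ONB unfolding D_const_def by blast
  thus ?thesis using Kc by blast
qed

theorem proposition5p3:
  fixes T :: "'n::finite \<Rightarrow> (nat \<Rightarrow> complex) \<Rightarrow> (nat \<Rightarrow> complex)"
  assumes "\<forall>j. bounded_op (T j)"
  shows "(\<Union>K\<in>{K. \<forall>j. compact_op (K j)}. D_const (\<lambda>j x. (\<lambda>k. T j x k + K j x k))) = ess_num_range T"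
proof
  show "(\<Union>K\<in>{K. \<forall>j. compact_op (K j)}. D_const (\<lambda>j x. (\<lambda>k. T j x k + K j x k))) \<subseteq> ess_num_range T"
    using subset_dir[OF assms] by blast
  show "ess_num_range T \<subseteq> (\<Union>K\<in>{K. \<forall>j. compact_op (K j)}. D_const (\<lambda>j x. (\<lambda>k. T j x k + K j x k)))"
    using supset_dir[OF assms] by blast
qed

end
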